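(* Assume $K<\infty$ and let $A\subset(a,b)$ be open. For every $(u,\gamma)\in BV(a,b)\times\mathcal M(a,b)$ with $\gamma=D^su+g\mathcal L^1$, $g\in L^1(a,b)$, and $u'-g\in L^2(a,b)$, one has $$E'(u,\gamma,A)\ge2\sum_{x\in J_u\cap A}f\Big(\tfrac12|[u](x)|\Big).$$
   Context: Fix $0<a<b<\infty$, $c_0>0$, $K\in(0,\infty)$; $f(t)=c_0\min\{t,1\}$; $I_\varepsilon(x)=(x-\varepsilon,x+\varepsilon)$; $\fint_Bh=\frac1{|B|}\int_Bh$. Flat norm $\|\mu\|_{\rm flat}=\sup\{\int\varphi\,d\mu:\varphi\in W^{1,\infty}_0(a,b),\|\varphi\|_{W^{1,\infty}}\le1\}$. For $u\in BV(a,b)$: $Du=u'\mathcal L^1+D^su$, $D^su=[u]\mathcal H^0\llcorner J_u+D^cu$, $[u](x)=u(x+)-u(x-)$. For open $A\subset(a,b)$ and $(u,\gamma)\in L^1(a,b)\times\mathcal M(a,b)$: $E_\varepsilon(u,\gamma,A)=\int_A|u'-g|^2dx+\frac1\varepsilon\int_Af\big(\varepsilon\fint_{I_\varepsilon(x)\cap(a,b)}|g|dt\big)dx$ if $u\in W^{1,1}(a,b)$, $\|u\|_{L^\infty}\le K$, $\gamma=g\mathcal L^1$, $g\in L^1(a,b)$, $u'-g\in L^2(a,b)$; $+\infty$ otherwise. The localized $\Gamma$-lower limit is $E'(u,\gamma,A)=\inf\{\liminf_{\varepsilon\to0}E_\varepsilon(u_\varepsilon,\gamma_\varepsilon,A):u_\varepsilon\to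 u\text{ in }L^1(a,b),\ \|\gamma_\varepsilon-\gamma\|_{\rm flat}\to0\}$. *)

theory Defs
  imports "HOL-Analysis.Analysis"
begin

definition fcap :: "real \<Rightarrow> real \<Rightarrow> real" where
  "fcap c0 t = c0 * min t 1"

text \<open>Finite (signed) Radon measures on (a,b): a pair of finite Borel measures on the
  real line, both concentrated on (a,b); the signed measure is fst - snd.\<close>
type_synonym smeasure = "real measure \<times> real measure"

definition fin_meas_on :: "real \<Rightarrow> real \<Rightarrow> real measure \<Rightarrow> bool" where
  "fin_meas_on a b \<mu> \<longleftrightarrow> sets \<mu> = sets borel \<and> finite_measure \<mu> \<and>
      emeasure \<mu> (UNIV - {a<..<b}) = 0"

definition smeas :: "real \<Rightarrow> real \<Rightarrow> smeasure \<Rightarrow> bool" where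
  "smeas a b \<gamma> \<longleftrightarrow> fin_meas_on a b (fst \<gamma>) \<and> fin_meas_on a b (snd \<gamma>)"

definition sval :: "smeasure \<Rightarrow> real set \<Rightarrow> real" where
  "sval \<gamma> S = measure (fst \<gamma>) S - measure (snd \<gamma>) S"

definition sint :: "smeasure \<Rightarrow> (real \<Rightarrow> real) \<Rightarrow> real" where
  "sint \<gamma> \<phi> = integral\<^sup>L (fst \<gamma>) \<phi> - integral\<^sup>L (snd \<gamma>) \<phi>"

text \<open>Test functions of W^{1,infinity}_0(a,b) with norm ||phi||_inf + ||phi'||_inf <= 1
  (extended by zero outside (a,b); ||phi'||_inf is the Lipschitz constant).\<close>
definition flat_tests :: "real \<Rightarrow> real \<Rightarrow> (real \<Rightarrow> real) set" where
  "flat_tests a b = {\<phi>. (\<forall>x. x \<notin> {a<..<b} \<longrightarrow> \<phi> x = 0) \<and>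
      (\<exists>L s. lipschitz_on L UNIV \<phi> \<and> (\<forall>x. \<bar>\<phi> x\<bar> \<le> s) \<and> s + L \<le> 1)}"

definition flat_dist :: "real \<Rightarrow> real \<Rightarrow> smeasure \<Rightarrow> smeasure \<Rightarrow> real" where
  "flat_dist a b \<gamma> \<delta> = (SUP \<phi>\<in>flat_tests a b. sint \<gamma> \<phi> - sint \<delta> \<phi>)"

definition test_C1c :: "real \<Rightarrow> real \<Rightarrow> (real \<Rightarrow> real) \<Rightarrow> bool" where
  "test_C1c a b \<phi> \<longleftrightarrow> \<phi> C1_differentiable_on UNIV \<and> closure {x. \<phi> x \<noteq> 0} \<subseteq> {a<..<b}"

definition weak_deriv :: "real \<Rightarrow> real \<Rightarrow> (real \<Rightarrow> real) \<Rightarrow> (real \<Rightarrow> real) \<Rightarrow> bool" where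
  "weak_deriv a b u v \<longleftrightarrow> (\<forall>\<phi>. test_C1c a b \<phi> \<longrightarrow>
      (LINT x:{a<..<b}|lborel. u x * deriv \<phi> x) = - (LINT x:{a<..<b}|lborel. v x * \<phi> x))"

definition meas_deriv :: "real \<Rightarrow> real \<Rightarrow> (real \<Rightarrow> real) \<Rightarrow> smeasure \<Rightarrow> bool" where
  "meas_deriv a b u \<mu> \<longleftrightarrow> smeas a b \<mu> \<and> (\<forall>\<phi>. test_C1c a b \<phi> \<longrightarrow>
      (LINT x:{a<..<b}|lborel. u x * deriv \<phi> x) = - sint \<mu> \<phi>)"

definition singular_sm :: "smeasure \<Rightarrow> bool" where
  "singular_sm \<sigma> \<longleftrightarrow> (\<exists>N\<in>sets borel. emeasure lborel N = 0 \<and>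
      emeasure (fst \<sigma>) (UNIV - N) = 0 \<and> emeasure (snd \<sigma>) (UNIV - N) = 0)"

text \<open>BV(a,b) and the hypothesis gamma = D^s u + g L^1 together with u' the density of the
  absolutely continuous part of Du (Du = u' L^1 + D^s u).\<close>
definition BV_decomp :: "real \<Rightarrow> real \<Rightarrow> (real \<Rightarrow> real) \<Rightarrow> (real \<Rightarrow> real) \<Rightarrow> smeasure \<Rightarrow> bool" where
  "BV_decomp a b u u' Dsu \<longleftrightarrow> set_integrable lborel {a<..<b} u \<and>
      set_integrable lborel {a<..<b} u' \<and> smeas a b Dsu \<and> singular_sm Dsu \<and>
      (\<exists>Du. meas_deriv a b u Du \<and>
         (\<forall>S\<in>sets borel. sval Du S = (LINT x:(S \<inter> {a<..<b})|lborel. u' x) + sval Dsu S))"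

definition ap_rlim :: "(real \<Rightarrow> real) \<Rightarrow> real \<Rightarrow> real \<Rightarrow> bool" where
  "ap_rlim u x L \<longleftrightarrow> ((\<lambda>r. (LINT t:{x<..<x+r}|lborel. \<bar>u t - L\<bar>) / r) \<longlongrightarrow> 0) (at_right 0)"

definition ap_llim :: "(real \<Rightarrow> real) \<Rightarrow> real \<Rightarrow> real \<Rightarrow> bool" where
  "ap_llim u x L \<longleftrightarrow> ((\<lambda>r. (LINT t:{x-r<..<x}|lborel. \<bar>u t - L\<bar>) / r) \<longlongrightarrow> 0) (at_right 0)"

definition jump_set :: "real \<Rightarrow> real \<Rightarrow> (real \<Rightarrow> real) \<Rightarrow> real set" where
  "jump_set a b u = {x\<in>{a<..<b}. \<exists>L1 L2. ap_rlim u x L1 \<and> ap_llim u x L2 \<and> L1 \<noteq> L2}"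

definition jump :: "(real \<Rightarrow> real) \<Rightarrow> real \<Rightarrow> real" where
  "jump u x = (THE L. ap_rlim u x L) - (THE L. ap_llim u x L)"

definition avg_abs :: "real \<Rightarrow> real \<Rightarrow> real \<Rightarrow> (real \<Rightarrow> real) \<Rightarrow> real \<Rightarrow> real" where
  "avg_abs a b \<epsilon> g x = (LINT t:({x-\<epsilon><..<x+\<epsilon>} \<inter> {a<..<b})|lborel. \<bar>g t\<bar>)
      / measure lborel ({x-\<epsilon><..<x+\<epsilon>} \<inter> {a<..<b})"

text \<open>energy for given u' (weak derivative of u) and g (density of gamma)\<close>
definition energy :: "real \<Rightarrow> real \<Rightarrow> real \<Rightarrow> real \<Rightarrow> (real \<Rightarrow> real) \<Rightarrow> (real \<Rightarrow> real) \<Rightarrow> real set \<Rightarrow> ennreal" where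
  "energy a b c0 \<epsilon> u' g A =
     (\<integral>\<^sup>+ x. ennreal ((u' x - g x)\<^sup>2) * indicator A x \<partial>lborel) +
     ennreal (1 / \<epsilon>) * (\<integral>\<^sup>+ x. ennreal (fcap c0 (\<epsilon> * avg_abs a b \<epsilon> g x)) * indicator A x \<partial>lborel)"

definition E_adm :: "real \<Rightarrow> real \<Rightarrow> real \<Rightarrow> (real \<Rightarrow> real) \<Rightarrow> smeasure \<Rightarrow> (real \<Rightarrow> real) \<Rightarrow> (real \<Rightarrow> real) \<Rightarrow> bool" where
  "E_adm a b K u \<gamma> u' g \<longleftrightarrow>
     set_integrable lborel {a<..<b} u \<and> set_integrable lborel {a<..<b} u' \<and> weak_deriv a b u u' \<and>
     (AE x in lborel. x \<in> {a<..<b} \<longrightarrow> \<bar>u x\<bar> \<le> K) \<and>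
     smeas a b \<gamma> \<and> set_integrable lborel {a<..<b} g \<and>
     (\<forall>S\<in>sets borel. sval \<gamma> S = (LINT x:(S \<inter> {a<..<b})|lborel. g x)) \<and>
     set_integrable lborel {a<..<b} (\<lambda>x. (u' x - g x)\<^sup>2)"

text \<open>E_eps(u,gamma,A); the value does not depend on the choice of the a.e.-determined
  u', g, and it is +infinity (Inf of the empty set) when no admissible u', g exist.\<close>
definition E_eps :: "real \<Rightarrow> real \<Rightarrow> real \<Rightarrow> real \<Rightarrow> real \<Rightarrow> (real \<Rightarrow> real) \<Rightarrow> smeasure \<Rightarrow> real set \<Rightarrow> ennreal" where
  "E_eps a b K c0 \<epsilon> u \<gamma> A =
     (INF p\<in>{(u', g). E_adm a b K u \<gamma> u' g}. energy a b c0 \<epsilon> (fst p) (snd p) A)"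

definition E_low :: "real \<Rightarrow> real \<Rightarrow> real \<Rightarrow> real \<Rightarrow> (real \<Rightarrow> real) \<Rightarrow> smeasure \<Rightarrow> real set \<Rightarrow> ennreal" where
  "E_low a b K c0 u \<gamma> A =
     (INF p\<in>{(U, \<Gamma>). (\<forall>\<epsilon>>0. set_integrable lborel {a<..<b} (U \<epsilon>) \<and> smeas a b (\<Gamma> \<epsilon>)) \<and>
               ((\<lambda>\<epsilon>. LINT x:{a<..<b}|lborel. \<bar>U \<epsilon> x - u x\<bar>) \<longlongrightarrow> 0) (at_right 0) \<and>
               ((\<lambda>\<epsilon>. flat_dist a b (\<Gamma> \<epsilon>) \<gamma>) \<longlongrightarrow> 0) (at_right 0)}.
        Liminf (at_right 0) (\<lambda>\<epsilon>. E_eps a b K c0 \<epsilon> ((fst p) \<epsilon>) ((snd p) \<epsilon>) A))"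

end

theory Submission
  imports Defs
begin
lemma deriv_tabs: "((\<lambda>t::real. t * \<bar>t\<bar>) has_real_derivative 2 * \<bar>t\<bar>) (at t)"
proof (cases "t = 0")
  case True
  have "((\<lambda>y::real. (y * \<bar>y\<bar> - 0 * \<bar>0\<bar>) / (y - 0)) \<longlongrightarrow> 0) (at 0)"
  proof -
    have "((\<lambda>y::real. \<bar>y\<bar>) \<longlongrightarrow> 0) (at 0)"
      using tendsto_rabs_zero[OF tendsto_ident_at[of 0 UNIV]] by simp
    then show ?thesis
      by (rule Lim_transform_eventually) (auto simp: eventually_at_filter)
  qed
  then show ?thesis using True by (simp add: has_field_derivative_iff)
next
  case False
  show ?thesis
  proof (cases "t > 0")
    case True
    have "((\<lambda>t::real. t * t) has_real_derivative 1 * t + 1 * t) (at t)"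
      by (rule DERIV_mult) (rule DERIV_ident)+
    then have d: "((\<lambda>t::real. t * t) has_real_derivative 2 * \<bar>t\<bar>) (at t)"
      using True by simp
    show ?thesis
      by (rule has_field_derivative_transform_within_open[OF d, where S="{0<..}"])
         (use True in auto)
  next
    case f2: False
    then have "t < 0" using False by auto
    have "((\<lambda>t::real. - t * t) has_real_derivative (- 1) * t + 1 * (- t)) (at t)"
      by (rule DERIV_mult) (auto intro!: derivative_eq_intros)
    then have d: "((\<lambda>t::real. - t * t) has_real_derivative 2 * \<bar>t\<bar>) (at t)"
      using \<open>t < 0\<close> by simp
    show ?thesis
      by (rule has_field_derivative_transform_within_open[OF d, where S="{..<0}"])
         (use \<open>t<0\<close> in auto)
  qed
qed

definition psi :: "real \<Rightarrow> real" where
  "psi s = ((1 - s\<^sup>2) * (1 - s\<^sup>2) + (1 - s\<^sup>2) * \<bar>1 - s\<^sup>2\<bar>) / 2"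
definition psi' :: "real \<Rightarrow> real" where
  "psi' s = - 2 * s * ((1 - s\<^sup>2) + \<bar>1 - s\<^sup>2\<bar>)"

lemma psi_deriv: "(psi has_real_derivative psi' s) (at s)"
proof -
  have h: "((\<lambda>s. 1 - s\<^sup>2) has_real_derivative - 2 * s) (at s)"
    by (auto intro!: derivative_eq_intros)
  have "((\<lambda>s. (1 - s\<^sup>2) * \<bar>1 - s\<^sup>2\<bar>) has_real_derivative 2 * \<bar>1 - s\<^sup>2\<bar> * (- 2 * s)) (at s)"
    using DERIV_chain2[OF deriv_tabs h] by simp
  moreover have "((\<lambda>s. (1 - s\<^sup>2) * (1 - s\<^sup>2)) has_real_derivative (- 2 * s) * (1 - s\<^sup>2) + (- 2 * s) * (1 - s\<^sup>2)) (at s)"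
    by (rule DERIV_mult[OF h h])
  ultimately have "((\<lambda>s. ((1 - s\<^sup>2) * (1 - s\<^sup>2) + (1 - s\<^sup>2) * \<bar>1 - s\<^sup>2\<bar>) / 2) has_real_derivative (((- 2 * s) * (1 - s\<^sup>2) + (- 2 * s) * (1 - s\<^sup>2)) + 2 * \<bar>1 - s\<^sup>2\<bar> * (- 2 * s)) / 2) (at s)"
    by (intro DERIV_cdivide DERIV_add)
  then have "(psi has_real_derivative (((- 2 * s) * (1 - s\<^sup>2) + (- 2 * s) * (1 - s\<^sup>2)) + 2 * \<bar>1 - s\<^sup>2\<bar> * (- 2 * s)) / 2) (at s)"
    unfolding psi_def[abs_def] .
  moreover have "(((- 2 * s) * (1 - s\<^sup>2) + (- 2 * s) * (1 - s\<^sup>2)) + 2 * \<bar>1 - s\<^sup>2\<bar> * (- 2 * s)) / 2 = psi' s"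
    unfolding psi'_def by (simp add: field_simps)
  ultimately show ?thesis by simp
qed

lemma sq_ge1: "\<bar>s::real\<bar> \<ge> 1 \<Longrightarrow> s\<^sup>2 \<ge> 1"
  using abs_le_square_iff[of 1 s] by simp

lemma sq_le1: "\<bar>s::real\<bar> \<le> 1 \<Longrightarrow> s\<^sup>2 \<le> 1"
  using abs_le_square_iff[of s 1] by simp

lemma psi_out: "\<bar>s\<bar> \<ge> 1 \<Longrightarrow> psi s = 0"
proof -
  assume "\<bar>s\<bar> \<ge> 1"
  then have "s\<^sup>2 \<ge> 1" by (rule sq_ge1)
  then have "\<bar>1 - s\<^sup>2\<bar> = - (1 - s\<^sup>2)" by simp
  then show ?thesis unfolding psi_def by (simp only:) (simp add: algebra_simps)
qed

lemma psi'_out: "\<bar>s\<bar> \<ge> 1 \<Longrightarrow> psi' s = 0"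
proof -
  assume "\<bar>s\<bar> \<ge> 1"
  then have "s\<^sup>2 \<ge> 1" by (rule sq_ge1)
  then have "\<bar>1 - s\<^sup>2\<bar> = - (1 - s\<^sup>2)" by simp
  then show ?thesis unfolding psi'_def by simp
qed

lemma psi_bounds: "0 \<le> psi s \<and> psi s \<le> 1"
proof (cases "\<bar>s\<bar> \<ge> 1")
  case True then show ?thesis by (simp add: psi_out)
next
  case False
  then have s2: "s\<^sup>2 \<le> 1" using sq_le1 by simp
  have "0 \<le> s\<^sup>2" by simp
  then have h: "0 \<le> 1 - s\<^sup>2" "1 - s\<^sup>2 \<le> 1" using s2 by auto
  have "psi s = (1 - s\<^sup>2) * (1 - s\<^sup>2)" unfolding psi_def using h by simp
  moreover have "(1 - s\<^sup>2) * (1 - s\<^sup>2) \<le> 1" using h mult_le_one by blast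
  ultimately show ?thesis using h by simp
qed

lemma psi_0: "psi 0 = 1" by (simp add: psi_def)

lemma psi'_0: "psi' 0 = 0" by (simp add: psi'_def)

lemma psi'_bound: "\<bar>psi' s\<bar> \<le> 4"
proof (cases "\<bar>s\<bar> \<ge> 1")
  case True then show ?thesis by (simp add: psi'_out)
next
  case False
  then have s2: "s\<^sup>2 \<le> 1" using sq_le1 by simp
  have "0 \<le> s\<^sup>2" by simp
  then have h: "0 \<le> 1 - s\<^sup>2" "1 - s\<^sup>2 \<le> 1" using s2 by auto
  have "\<bar>psi' s\<bar> = 4 * (\<bar>s\<bar> * (1 - s\<^sup>2))" unfolding psi'_def using h
    by (simp add: abs_mult)
  moreover have "\<bar>s\<bar> * (1 - s\<^sup>2) \<le> 1" using False h mult_le_one[of "\<bar>s\<bar>" "1 - s\<^sup>2"] by simp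
  ultimately show ?thesis by simp
qed

lemma psi'_cont: "continuous_on UNIV psi'"
  unfolding psi'_def by (intro continuous_intros)

lemma psi'_sign: "s \<le> 0 \<Longrightarrow> psi' s \<ge> 0" "s \<ge> 0 \<Longrightarrow> psi' s \<le> 0"
  unfolding psi'_def by (auto intro!: mult_nonneg_nonneg mult_nonpos_nonneg simp: abs_if)

definition phi :: "real \<Rightarrow> real \<Rightarrow> real \<Rightarrow> real" where
  "phi x \<eta> y = psi ((y - x) / \<eta>)"
definition phi' :: "real \<Rightarrow> real \<Rightarrow> real \<Rightarrow> real" where
  "phi' x \<eta> y = psi' ((y - x) / \<eta>) / \<eta>"

lemma phi_deriv: "(phi x \<eta> has_real_derivative phi' x \<eta> y) (at y)"
proof -
  have l0: "((\<lambda>y. y - x) has_real_derivative 1) (at y)"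
    by (auto intro!: derivative_eq_intros)
  have l: "((\<lambda>y. (y - x) / \<eta>) has_real_derivative 1 / \<eta>) (at y)"
    by (rule DERIV_cdivide[OF l0])
  show ?thesis using DERIV_chain2[OF psi_deriv l]
    unfolding phi_def[abs_def] phi'_def by simp
qed

lemma deriv_phi: "deriv (phi x \<eta>) y = phi' x \<eta> y"
  by (rule DERIV_imp_deriv[OF phi_deriv])

lemma out_aux: "(\<eta>::real) > 0 \<Longrightarrow> y \<notin> {x-\<eta><..<x+\<eta>} \<Longrightarrow> \<bar>(y - x) / \<eta>\<bar> \<ge> 1"
proof -
  assume a: "\<eta> > 0" "y \<notin> {x-\<eta><..<x+\<eta>}"
  then have "y \<le> x - \<eta> \<or> y \<ge> x + \<eta>" unfolding greaterThanLessThan_iff by linarith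
  then have "\<bar>y - x\<bar> \<ge> \<eta>" by arith
  then show ?thesis using a(1) by (simp add: abs_divide le_divide_eq)
qed

lemma phi'_out: "\<eta> > 0 \<Longrightarrow> y \<notin> {x-\<eta><..<x+\<eta>} \<Longrightarrow> phi' x \<eta> y = 0"
  unfolding phi'_def using psi'_out[OF out_aux] by simp

lemma phi_out: "\<eta> > 0 \<Longrightarrow> y \<notin> {x-\<eta><..<x+\<eta>} \<Longrightarrow> phi x \<eta> y = 0"
  unfolding phi_def using psi_out[OF out_aux] by simp

lemma phi'_bound: "\<eta> > 0 \<Longrightarrow> \<bar>phi' x \<eta> y\<bar> \<le> 4 / \<eta>"
  unfolding phi'_def using psi'_bound[of "(y - x) / \<eta>"]
  by (simp add: divide_right_mono)

lemma phi_bound: "\<bar>phi x \<eta> y\<bar> \<le> 1"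
  unfolding phi_def using psi_bounds[of "(y - x) / \<eta>"] by simp

lemma phi'_x: "phi' x \<eta> x = 0"
  unfolding phi'_def by (simp add: psi'_0)

lemma phi'_cont: "continuous_on UNIV (phi' x \<eta>)"
proof -
  have "continuous_on UNIV (\<lambda>y. psi' ((y - x) / \<eta>))"
    by (rule continuous_on_compose2[OF psi'_cont]) (cases "\<eta> = 0", auto intro!: continuous_intros)
  moreover have "phi' x \<eta> = (\<lambda>y. (1 / \<eta>) * psi' ((y - x) / \<eta>))"
    by (auto simp: phi'_def fun_eq_iff)
  ultimately show ?thesis
    using continuous_on_mult_left[of UNIV "\<lambda>y. psi' ((y - x) / \<eta>)" "1/\<eta>"] by simp
qed

lemma phi'_meas: "phi' x \<eta> \<in> borel_measurable borel"
  by (rule borel_measurable_continuous_onI[OF phi'_cont])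

lemma phi_test:
  assumes "\<eta> > 0" "a < x - \<eta>" "x + \<eta> < b"
  shows "test_C1c a b (phi x \<eta>)"
  unfolding test_C1c_def
proof
  show "phi x \<eta> C1_differentiable_on UNIV"
    unfolding C1_differentiable_on_eq
  proof
    show "\<forall>y\<in>UNIV. phi x \<eta> differentiable at y"
      using phi_deriv by (auto simp: differentiable_def has_field_derivative_def)
    have "vector_derivative (phi x \<eta>) (at y) = phi' x \<eta> y" for y
      by (rule vector_derivative_at)
         (use phi_deriv in \<open>simp add: has_real_derivative_iff_has_vector_derivative\<close>)
    then show "continuous_on UNIV (\<lambda>y. vector_derivative (phi x \<eta>) (at y))"
      using phi'_cont by simp
  qed
  have "{y. phi x \<eta> y \<noteq> 0} \<subseteq> {x-\<eta>..x+\<eta>}"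
  proof
    fix y assume "y \<in> {y. phi x \<eta> y \<noteq> 0}"
    then have "y \<in> {x-\<eta><..<x+\<eta>}" using phi_out[OF assms(1)] by blast
    then show "y \<in> {x-\<eta>..x+\<eta>}" by auto
  qed
  then have "closure {y. phi x \<eta> y \<noteq> 0} \<subseteq> {x-\<eta>..x+\<eta>}"
    by (rule closure_minimal) auto
  then show "closure {y. phi x \<eta> y \<noteq> 0} \<subseteq> {a<..<b}"
    using assms by auto
qed

lemma ftc_phi:
  assumes "c \<le> d"
  shows "integral\<^sup>L lborel (\<lambda>y. indicator {c..d} y *\<^sub>R phi' x \<eta> y) = phi x \<eta> d - phi x \<eta> c"
  apply (rule integral_FTC_atLeastAtMost[OF assms])
  using phi_deriv
   apply (simp add: has_real_derivative_iff_has_vector_derivative[symmetric] has_field_derivative_at_within)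
  using phi'_cont continuous_on_subset by blast

lemma phi_left: "\<eta> > 0 \<Longrightarrow> integral\<^sup>L lborel (\<lambda>y. indicator {x-\<eta>..x} y * phi' x \<eta> y) = 1"
  using ftc_phi[of "x - \<eta>" x x \<eta>] by (simp add: phi_def psi_0 psi_out)

lemma phi_right: "\<eta> > 0 \<Longrightarrow> integral\<^sup>L lborel (\<lambda>y. indicator {x..x+\<eta>} y * phi' x \<eta> y) = -1"
  using ftc_phi[of x "x + \<eta>" x \<eta>] by (simp add: phi_def psi_0 psi_out)

lemma si_meas: "set_integrable lborel S (u::real\<Rightarrow>real) \<Longrightarrow> (\<lambda>y. indicator S y * u y) \<in> borel_measurable lborel"
  using borel_measurable_integrable[of lborel "\<lambda>x. indicator S x *\<^sub>R u x"]
  unfolding set_integrable_def by simp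

lemma const_set_int: "set_integrable lborel {(c::real)<..<d} (\<lambda>_. L::real)"
proof -
  have "set_integrable lborel {c..d} (\<lambda>_. L)"
    by (rule borel_integrable_atLeastAtMost') (rule continuous_on_const)
  then show ?thesis by (rule set_integrable_subset) auto
qed

lemma abs_diff_set_int:
  fixes u :: "real \<Rightarrow> real"
  assumes "set_integrable lborel {a<..<b} u" "a \<le> c" "d \<le> b"
  shows "set_integrable lborel {c<..<d} (\<lambda>t. \<bar>u t - L\<bar>)"
proof -
  have "set_integrable lborel {c<..<d} u"
    by (rule set_integrable_subset[OF assms(1)]) (use assms in auto)
  then have "set_integrable lborel {c<..<d} (\<lambda>t. u t - L)"
    using const_set_int by (rule set_integral_diff)
  then show ?thesis by (rule set_integrable_abs)
qed

lemma int_est: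
  fixes u :: "real \<Rightarrow> real"
  assumes eta: "\<eta> > 0" and ab: "a < x - \<eta>" "x + \<eta> < b"
    and u: "set_integrable lborel {a<..<b} u"
  shows "\<bar>(LINT y:{a<..<b}|lborel. u y * phi' x \<eta> y) - (L2 - L1)\<bar> \<le>
     4 / \<eta> * ((LINT t:{x-\<eta><..<x}|lborel. \<bar>u t - L2\<bar>) + (LINT t:{x<..<x+\<eta>}|lborel. \<bar>u t - L1\<bar>))"
proof -
  define P where "P y = indicator {a<..<b} y * u y * phi' x \<eta> y" for y
  define V where "V y = indicator {x-\<eta>..x} y * phi' x \<eta> y * L2 + indicator {x..x+\<eta>} y * phi' x \<eta> y * L1" for y
  define B where "B y = 4 / \<eta> * (indicator {x-\<eta><..<x} y * \<bar>u y - L2\<bar> + indicator {x<..<x+\<eta>} y * \<bar>u y - L1\<bar>)" for y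
  have iu: "integrable lborel (\<lambda>y. indicator {a<..<b} y * u y)"
    using u unfolding set_integrable_def by simp
  have intP: "integrable lborel P"
  proof (rule Bochner_Integration.integrable_bound[where f="\<lambda>y. 4 / \<eta> * (indicator {a<..<b} y * u y)"])
    show "integrable lborel (\<lambda>y. 4 / \<eta> * (indicator {a<..<b} y * u y))"
      using iu by (rule integrable_mult_right)
    show "P \<in> borel_measurable lborel" unfolding P_def
      using si_meas[OF u] phi'_meas by measurable
    show "AE y in lborel. norm (P y) \<le> norm (4 / \<eta> * (indicator {a<..<b} y * u y))"
    proof (rule AE_I2)
      fix y
      have "\<bar>P y\<bar> = \<bar>indicator {a<..<b} y * u y\<bar> * \<bar>phi' x \<eta> y\<bar>"
        unfolding P_def by (simp add: abs_mult)
      also have "\<dots> \<le> \<bar>indicator {a<..<b} y * u y\<bar> * (4 / \<eta>)"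
        by (intro mult_left_mono phi'_bound eta) simp
      finally show "norm (P y) \<le> norm (4 / \<eta> * (indicator {a<..<b} y * u y))"
        using eta by (simp add: abs_mult mult.commute)
    qed
  qed
  have i1: "integrable lborel (\<lambda>y. indicator {c..d} y * phi' x \<eta> y)" for c d
    using borel_integrable_atLeastAtMost'[OF continuous_on_subset[OF phi'_cont subset_UNIV], of c d]
    unfolding set_integrable_def by simp
  have v1: "integrable lborel (\<lambda>y. indicator {x-\<eta>..x} y * phi' x \<eta> y * L2)"
    using i1[of "x-\<eta>" x] by simp
  have v2: "integrable lborel (\<lambda>y. indicator {x..x+\<eta>} y * phi' x \<eta> y * L1)"
    using i1[of x "x+\<eta>"] by simp
  have intV: "integrable lborel V" unfolding V_def
    by (rule Bochner_Integration.integrable_add[OF v1 v2])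
  have intV_val: "integral\<^sup>L lborel V = L2 - L1"
    unfolding V_def Bochner_Integration.integral_add[OF v1 v2]
    using phi_left[OF eta, of x] phi_right[OF eta, of x] by simp
  have ib1: "integrable lborel (\<lambda>y. indicator {x-\<eta><..<x} y * \<bar>u y - L2\<bar>)"
    using abs_diff_set_int[OF u, of "x-\<eta>" x L2] ab eta unfolding set_integrable_def by simp
  have ib2: "integrable lborel (\<lambda>y. indicator {x<..<x+\<eta>} y * \<bar>u y - L1\<bar>)"
    using abs_diff_set_int[OF u, of x "x+\<eta>" L1] ab eta unfolding set_integrable_def by simp
  have intB: "integrable lborel B" unfolding B_def
    by (rule Bochner_Integration.integrable_mult_right) (rule Bochner_Integration.integrable_add[OF ib1 ib2])
  have "integral\<^sup>L lborel B = 4 / \<eta> * integral\<^sup>L lborel (\<lambda>y. indicator {x-\<eta><..<x} y * \<bar>u y - L2\<bar> + indicator {x<..<x+\<eta>} y * \<bar>u y - L1\<bar>)"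
    unfolding B_def by (rule integral_mult_right_zero)
  also have "\<dots> = 4 / \<eta> * ((LINT t:{x-\<eta><..<x}|lborel. \<bar>u t - L2\<bar>) + (LINT t:{x<..<x+\<eta>}|lborel. \<bar>u t - L1\<bar>))"
    unfolding Bochner_Integration.integral_add[OF ib1 ib2] set_lebesgue_integral_def by simp
  finally have intB_val: "integral\<^sup>L lborel B = 4 / \<eta> * ((LINT t:{x-\<eta><..<x}|lborel. \<bar>u t - L2\<bar>) + (LINT t:{x<..<x+\<eta>}|lborel. \<bar>u t - L1\<bar>))" .
  have pw: "\<bar>P y - V y\<bar> \<le> B y" for y
  proof -
    have Bn: "0 \<le> B y" unfolding B_def using eta by (auto intro!: mult_nonneg_nonneg add_nonneg_nonneg)
    consider "y \<in> {x-\<eta><..<x}" | "y = x" | "y \<in> {x<..<x+\<eta>}" | "y \<notin> {x-\<eta><..<x+\<eta>}"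
      by force
    then show ?thesis
    proof cases
      case 1
      then have "y \<in> {a<..<b}" using ab by auto
      then have "P y - V y = (u y - L2) * phi' x \<eta> y"
        unfolding P_def V_def using 1 by (auto simp: algebra_simps)
      also have "\<bar>\<dots>\<bar> \<le> \<bar>u y - L2\<bar> * (4 / \<eta>)"
        unfolding abs_mult by (intro mult_left_mono phi'_bound eta) simp
      also have "\<dots> = B y" unfolding B_def using 1 by simp
      finally show ?thesis .
    next
      case 2
      then show ?thesis using Bn unfolding P_def V_def by (simp add: phi'_x)
    next
      case 3
      then have "y \<in> {a<..<b}" using ab by auto
      then have "P y - V y = (u y - L1) * phi' x \<eta> y"
        unfolding P_def V_def using 3 by (auto simp: algebra_simps)
      also have "\<bar>\<dots>\<bar> \<le> \<bar>u y - L1\<bar> * (4 / \<eta>)"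
        unfolding abs_mult by (intro mult_left_mono phi'_bound eta) simp
      also have "\<dots> = B y" unfolding B_def using 3 by simp
      finally show ?thesis .
    next
      case 4
      then show ?thesis using Bn unfolding P_def V_def by (simp add: phi'_out[OF eta])
    qed
  qed
  have "(LINT y:{a<..<b}|lborel. u y * phi' x \<eta> y) = integral\<^sup>L lborel P"
    unfolding set_lebesgue_integral_def P_def by (simp add: mult.assoc)
  then have "\<bar>(LINT y:{a<..<b}|lborel. u y * phi' x \<eta> y) - (L2 - L1)\<bar> = \<bar>integral\<^sup>L lborel (\<lambda>y. P y - V y)\<bar>"
    by (simp add: Bochner_Integration.integral_diff[OF intP intV] intV_val)
  also have "\<dots> \<le> integral\<^sup>L lborel (\<lambda>y. \<bar>P y - V y\<bar>)" by (rule integral_abs_bound)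
  also have "\<dots> \<le> integral\<^sup>L lborel B"
    by (rule integral_mono[OF _ intB pw]) (intro Bochner_Integration.integrable_abs Bochner_Integration.integrable_diff intP intV)
  finally show ?thesis using intB_val by simp
qed

lemma fcap_conc:
  assumes c0: "c0 > 0" and h: "0 \<le> mt" "mt \<le> m" "mt \<le> M" "M > 0"
  shows "mt / M * fcap c0 (M / 2) \<le> fcap c0 (m / 2)"
proof -
  have f1: "fcap c0 (M / 2) \<le> c0 * (M / 2)" "fcap c0 (M / 2) \<le> c0" "0 \<le> fcap c0 (M / 2)"
    unfolding fcap_def using c0 h by (auto intro: mult_left_mono)
  have r: "0 \<le> mt / M" "mt / M \<le> 1" using h by auto
  show ?thesis
  proof (cases "m / 2 \<ge> 1")
    case True
    then have "fcap c0 (m / 2) = c0" unfolding fcap_def by simp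
    moreover have "mt / M * fcap c0 (M / 2) \<le> 1 * c0"
      using f1 r c0 by (intro mult_mono) auto
    ultimately show ?thesis by simp
  next
    case False
    then have e: "fcap c0 (m / 2) = c0 * (m / 2)" unfolding fcap_def by simp
    have "mt / M * fcap c0 (M / 2) \<le> mt / M * (c0 * (M / 2))"
      using f1 r by (intro mult_left_mono) auto
    also have "\<dots> = c0 * (mt / 2)" using h by (simp add: field_simps)
    also have "\<dots> \<le> c0 * (m / 2)" using h c0 by simp
    finally have "mt / M * fcap c0 (M / 2) \<le> c0 * (m / 2)" .
    then show ?thesis using e by linarith
  qed
qed

lemma fub:
  fixes g :: "real \<Rightarrow> real"
  assumes eps: "\<epsilon> > 0" and c0: "c0 > 0" and cd: "c < d"
    and sub: "a \<le> c - 2 * \<epsilon>" "d + 2 * \<epsilon> \<le> b"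
    and hg: "set_integrable lborel {a<..<b} g"
  shows "\<exists>h. h \<in> borel_measurable lborel \<and>
    (\<forall>y. h y \<le> ennreal (fcap c0 (\<epsilon> * avg_abs a b \<epsilon> g y)) * indicator {c-\<epsilon><..<d+\<epsilon>} y) \<and>
    ennreal (2 * fcap c0 ((LINT t:{c<..<d}|lborel. \<bar>g t\<bar>) / 2)) \<le> ennreal (1 / \<epsilon>) * integral\<^sup>N lborel h"
proof -
  define R where "R = {c-\<epsilon><..<d+\<epsilon>}"
  define G where "G t = indicator {c<..<d} t * \<bar>g t\<bar>" for t
  define M where "M = (LINT t:{c<..<d}|lborel. \<bar>g t\<bar>)"
  have gcd: "set_integrable lborel {c<..<d} (\<lambda>t. \<bar>g t\<bar>)"
    by (rule set_integrable_abs, rule set_integrable_subset[OF hg]) (use sub eps in auto)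
  have intG: "integrable lborel G"
    using gcd unfolding set_integrable_def G_def by simp
  have measG: "G \<in> borel_measurable lborel"
    by (rule borel_measurable_integrable[OF intG])
  have Gnn: "0 \<le> G t" for t unfolding G_def by simp
  have M_eq: "M = integral\<^sup>L lborel G"
    unfolding M_def G_def set_lebesgue_integral_def by simp
  have Mnn: "0 \<le> M" unfolding M_eq using Gnn by (simp add: integral_nonneg)
  show ?thesis
  proof (cases "M = 0")
    case True
    then show ?thesis unfolding M_def[symmetric]
      by (intro exI[of _ "\<lambda>_. 0"]) (simp add: fcap_def)
  next
    case False
    then have Mpos: "M > 0" using Mnn by simp
    define mt where "mt y = integral\<^sup>L lborel (\<lambda>t. G t * indicator {y-\<epsilon><..<y+\<epsilon>} t)" for y
    have intGi: "integrable lborel (\<lambda>t. G t * indicator {y-\<epsilon><..<y+\<epsilon>} t)" for y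
      using integrable_mult_indicator[OF _ intG, of "{y-\<epsilon><..<y+\<epsilon>}"]
      by (simp add: mult.commute)
    have mt_nn: "0 \<le> mt y" for y unfolding mt_def using Gnn by (simp add: integral_nonneg)
    have mt_M: "mt y \<le> M" for y
      unfolding mt_def M_eq
      by (rule integral_mono[OF intGi intG]) (simp add: Gnn indicator_def)
    define K' where "K' = ennreal (fcap c0 (M / 2) / M)"
    have key: "K' * (ennreal (mt y) * indicator R y) \<le>
        ennreal (fcap c0 (\<epsilon> * avg_abs a b \<epsilon> g y)) * indicator R y" for y
    proof (cases "y \<in> R")
      case False then show ?thesis by simp
    next
      case True
      then have yr: "c - \<epsilon> < y" "y < d + \<epsilon>" unfolding R_def by auto
      have I: "{y-\<epsilon><..<y+\<epsilon>} \<inter> {a<..<b} = {y-\<epsilon><..<y+\<epsilon>}"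
        using yr sub by auto
      define m where "m = (LINT t:{y-\<epsilon><..<y+\<epsilon>}|lborel. \<bar>g t\<bar>)"
      have av: "\<epsilon> * avg_abs a b \<epsilon> g y = m / 2"
        unfolding avg_abs_def I m_def using eps by simp
      have gy: "set_integrable lborel {y-\<epsilon><..<y+\<epsilon>} (\<lambda>t. \<bar>g t\<bar>)"
        by (rule set_integrable_abs, rule set_integrable_subset[OF hg]) (use sub yr in auto)
      have mtm: "mt y \<le> m"
        unfolding mt_def m_def set_lebesgue_integral_def
        by (rule integral_mono[OF intGi])
           (use gy in \<open>simp_all add: set_integrable_def G_def indicator_def\<close>)
      have ineq: "mt y / M * fcap c0 (M / 2) \<le> fcap c0 (m / 2)"
        by (rule fcap_conc[OF c0 mt_nn mtm mt_M Mpos])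
      have fnn: "0 \<le> fcap c0 (M / 2) / M" unfolding fcap_def using c0 Mpos by simp
      have "K' * ennreal (mt y) = ennreal (fcap c0 (M / 2) / M * mt y)"
        unfolding K'_def by (rule ennreal_mult[symmetric, OF fnn mt_nn])
      also have "fcap c0 (M / 2) / M * mt y = mt y / M * fcap c0 (M / 2)" by simp
      also have "ennreal (mt y / M * fcap c0 (M / 2)) \<le> ennreal (fcap c0 (m / 2))"
        by (rule ennreal_leI[OF ineq])
      finally show ?thesis using True unfolding av by simp
    qed
    define F where "F t y = K' * ennreal (G t * indicator {y-\<epsilon><..<y+\<epsilon>} t) * indicator R y" for t y
    have Hm: "(\<lambda>t. ennreal (G t * indicator {y-\<epsilon><..<y+\<epsilon>} t)) \<in> borel_measurable lborel" for y
      using measG by measurable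
    note Hm[measurable]
    have stepA: "(\<integral>\<^sup>+ t. F t y \<partial>lborel) = K' * (ennreal (mt y) * indicator R y)" for y
    proof -
      have "(\<integral>\<^sup>+ t. F t y \<partial>lborel) = K' * (\<integral>\<^sup>+ t. ennreal (G t * indicator {y-\<epsilon><..<y+\<epsilon>} t) * indicator R y \<partial>lborel)"
        unfolding F_def mult.assoc by (rule nn_integral_cmult) measurable
      also have "(\<integral>\<^sup>+ t. ennreal (G t * indicator {y-\<epsilon><..<y+\<epsilon>} t) * indicator R y \<partial>lborel) = (\<integral>\<^sup>+ t. ennreal (G t * indicator {y-\<epsilon><..<y+\<epsilon>} t) \<partial>lborel) * indicator R y"
        by (rule nn_integral_multc) measurable
      also have "(\<integral>\<^sup>+ t. ennreal (G t * indicator {y-\<epsilon><..<y+\<epsilon>} t) \<partial>lborel) = ennreal (mt y)"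
        unfolding mt_def by (rule nn_integral_eq_integral[OF intGi]) (simp add: Gnn)
      finally show ?thesis .
    qed
    have Fm: "(\<lambda>(t, y). F t y) \<in> borel_measurable (lborel \<Otimes>\<^sub>M lborel)"
    proof -
      have "(\<lambda>(t, y). F t y) = (\<lambda>p. K' * ennreal (G (fst p) * (if \<bar>snd p - fst p\<bar> < \<epsilon> then 1 else 0)) * indicator R (snd p))"
        by (auto simp: fun_eq_iff F_def indicator_def abs_diff_less_iff)
      also have "\<dots> \<in> borel_measurable (lborel \<Otimes>\<^sub>M lborel)"
        using measG unfolding R_def by measurable
      finally show ?thesis .
    qed
    have stepD: "(\<integral>\<^sup>+ y. F t y \<partial>lborel) = K' * ennreal (G t) * ennreal (2 * \<epsilon>)" for t
    proof -
      have "F t y = K' * ennreal (G t) * indicator {t-\<epsilon><..<t+\<epsilon>} y" for y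
      proof (cases "t \<in> {c<..<d}")
        case True
        then show ?thesis unfolding F_def R_def
          by (auto simp: indicator_def ennreal_mult' G_def)
      next
        case False
        then show ?thesis unfolding F_def G_def by simp
      qed
      then have "(\<integral>\<^sup>+ y. F t y \<partial>lborel) = (\<integral>\<^sup>+ y. K' * ennreal (G t) * indicator {t-\<epsilon><..<t+\<epsilon>} y \<partial>lborel)"
        by simp
      also have "\<dots> = K' * ennreal (G t) * ennreal (2 * \<epsilon>)"
        using eps by (simp add: nn_integral_cmult)
      finally show ?thesis .
    qed
    define h where "h y = (\<integral>\<^sup>+ t. F t y \<partial>lborel)" for y
    have hm: "h \<in> borel_measurable lborel"
    proof -
      have "(\<lambda>(y, t). F t y) = (\<lambda>p. K' * ennreal (G (snd p) * (if \<bar>fst p - snd p\<bar> < \<epsilon> then 1 else 0)) * indicator R (fst p))"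
        by (auto simp: fun_eq_iff F_def indicator_def abs_diff_less_iff)
      also have "\<dots> \<in> borel_measurable (lborel \<Otimes>\<^sub>M lborel)"
        using measG unfolding R_def by measurable
      finally have "(\<lambda>(y, t). F t y) \<in> borel_measurable (lborel \<Otimes>\<^sub>M lborel)" .
      then show ?thesis unfolding h_def[abs_def] by (rule lborel.borel_measurable_nn_integral)
    qed
    have hle: "\<forall>y. h y \<le> ennreal (fcap c0 (\<epsilon> * avg_abs a b \<epsilon> g y)) * indicator R y"
      using stepA key by (simp add: h_def)
    have "integral\<^sup>N lborel h = (\<integral>\<^sup>+ y. (\<integral>\<^sup>+ t. F t y \<partial>lborel) \<partial>lborel)"
      by (simp add: h_def[abs_def])
    also have "\<dots> = (\<integral>\<^sup>+ t. (\<integral>\<^sup>+ y. F t y \<partial>lborel) \<partial>lborel)"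
      by (rule lborel_pair.Fubini'[OF Fm])
    also have "\<dots> = (\<integral>\<^sup>+ t. K' * ennreal (2 * \<epsilon>) * ennreal (G t) \<partial>lborel)"
      by (simp add: stepD mult_ac)
    also have "\<dots> = K' * ennreal (2 * \<epsilon>) * ennreal M"
      using measG by (simp add: nn_integral_cmult nn_integral_eq_integral[OF intG] Gnn M_eq)
    finally have T: "integral\<^sup>N lborel h = K' * ennreal (2 * \<epsilon>) * ennreal M" .
    moreover have "ennreal (1 / \<epsilon>) * (K' * ennreal (2 * \<epsilon>) * ennreal M) = ennreal (2 * fcap c0 (M / 2))"
    proof -
      have fnn: "0 \<le> fcap c0 (M / 2) / M" unfolding fcap_def using c0 Mpos by simp
      have "ennreal (1 / \<epsilon>) * (K' * ennreal (2 * \<epsilon>) * ennreal M) = ennreal (1 / \<epsilon> * (fcap c0 (M / 2) / M * (2 * \<epsilon>) * M))"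
      proof -
        have e1: "K' * ennreal (2 * \<epsilon>) = ennreal (fcap c0 (M / 2) / M * (2 * \<epsilon>))"
          unfolding K'_def by (rule ennreal_mult[symmetric]) (use fnn eps in auto)
        have pn: "0 \<le> fcap c0 (M / 2) / M * (2 * \<epsilon>)"
          by (rule mult_nonneg_nonneg[OF fnn]) (use eps in simp)
        have e2: "ennreal (fcap c0 (M / 2) / M * (2 * \<epsilon>)) * ennreal M = ennreal (fcap c0 (M / 2) / M * (2 * \<epsilon>) * M)"
          by (rule ennreal_mult[symmetric, OF pn Mnn])
        have e3: "ennreal (1 / \<epsilon>) * ennreal (fcap c0 (M / 2) / M * (2 * \<epsilon>) * M) = ennreal (1 / \<epsilon> * (fcap c0 (M / 2) / M * (2 * \<epsilon>) * M))"
          by (rule ennreal_mult[symmetric, OF _ mult_nonneg_nonneg[OF pn Mnn]]) (use eps in simp)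
        show ?thesis unfolding e1 e2 e3 ..
      qed
      also have "1 / \<epsilon> * (fcap c0 (M / 2) / M * (2 * \<epsilon>) * M) = 2 * fcap c0 (M / 2)"
        using eps Mpos by (simp add: field_simps)
      finally show ?thesis .
    qed
    ultimately show ?thesis unfolding M_def[symmetric]
      using hm hle T unfolding R_def by (intro exI[of _ h]) simp
  qed
qed

lemma ev_small: "(c::real) > 0 \<Longrightarrow> eventually (\<lambda>r. 0 < r \<and> r < c) (at_right 0)"
  unfolding eventually_at_right_field by (intro exI[of _ c]) auto

lemma const_int_val: "(c::real) \<le> d \<Longrightarrow> (LINT t:{c<..<d}|lborel. (K::real)) = (d - c) * K"
  by (subst set_integral_const) auto

lemma lim_unique_aux:
  fixes u :: "real \<Rightarrow> real"
  assumes u: "set_integrable lborel {a<..<b} u"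
    and S: "\<And>r. 0 < r \<Longrightarrow> r < c \<Longrightarrow> S r = {l r<..<l r + r} \<and> a \<le> l r \<and> l r + r \<le> b"
    and c: "c > 0"
    and h1: "((\<lambda>r. (LINT t:S r|lborel. \<bar>u t - L\<bar>) / r) \<longlongrightarrow> 0) (at_right 0)"
    and h2: "((\<lambda>r. (LINT t:S r|lborel. \<bar>u t - L'\<bar>) / r) \<longlongrightarrow> 0) (at_right 0)"
  shows "L = L'"
proof -
  let ?f = "\<lambda>r. (LINT t:S r|lborel. \<bar>u t - L\<bar>) / r + (LINT t:S r|lborel. \<bar>u t - L'\<bar>) / r"
  have "(?f \<longlongrightarrow> 0 + 0) (at_right 0)" using h1 h2 by (rule tendsto_add)
  moreover have "eventually (\<lambda>r. \<bar>L - L'\<bar> \<le> ?f r) (at_right 0)"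
    using ev_small[OF c]
  proof (rule eventually_mono)
    fix r assume r: "0 < r \<and> r < c"
    note Sr = S[of r, OF conjunct1[OF r] conjunct2[OF r]]
    have i1: "set_integrable lborel (S r) (\<lambda>t. \<bar>u t - L\<bar>)"
      using abs_diff_set_int[OF u, of "l r" "l r + r" L] Sr by simp
    have i2: "set_integrable lborel (S r) (\<lambda>t. \<bar>u t - L'\<bar>)"
      using abs_diff_set_int[OF u, of "l r" "l r + r" L'] Sr by simp
    have "r * \<bar>L - L'\<bar> = (LINT t:S r|lborel. \<bar>L - L'\<bar>)"
      using Sr r const_int_val[of "l r" "l r + r" "\<bar>L - L'\<bar>"] by simp
    also have "\<dots> \<le> (LINT t:S r|lborel. \<bar>u t - L\<bar> + \<bar>u t - L'\<bar>)"
      by (rule set_integral_mono) (use Sr const_set_int i1 i2 in auto)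
    also have "\<dots> = (LINT t:S r|lborel. \<bar>u t - L\<bar>) + (LINT t:S r|lborel. \<bar>u t - L'\<bar>)"
      by (rule set_integral_add(2)[OF i1 i2])
    finally have "\<bar>L - L'\<bar> \<le> ((LINT t:S r|lborel. \<bar>u t - L\<bar>) + (LINT t:S r|lborel. \<bar>u t - L'\<bar>)) / r"
      using r by (simp add: pos_le_divide_eq mult.commute)
    then show "\<bar>L - L'\<bar> \<le> ?f r" by (simp add: add_divide_distrib)
  qed
  ultimately have "\<bar>L - L'\<bar> \<le> 0 + 0"
    by (rule tendsto_lowerbound) simp
  then show ?thesis by simp
qed

lemma ap_rlim_unique:
  fixes u :: "real \<Rightarrow> real"
  assumes x: "x \<in> {a<..<b}" and u: "set_integrable lborel {a<..<b} u"
    and h1: "ap_rlim u x L" and h2: "ap_rlim u x L'"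
  shows "L = L'"
  by (rule lim_unique_aux[OF u, where S="\<lambda>r. {x<..<x+r}" and l="\<lambda>_. x" and c="b - x"])
     (use x h1 h2 in \<open>auto simp: ap_rlim_def\<close>)

lemma ap_llim_unique:
  fixes u :: "real \<Rightarrow> real"
  assumes x: "x \<in> {a<..<b}" and u: "set_integrable lborel {a<..<b} u"
    and h1: "ap_llim u x L" and h2: "ap_llim u x L'"
  shows "L = L'"
  by (rule lim_unique_aux[OF u, where S="\<lambda>r. {x-r<..<x}" and l="\<lambda>r. x - r" and c="x - a"])
     (use x h1 h2 in \<open>auto simp: ap_llim_def\<close>)

lemma jump_val:
  fixes u :: "real \<Rightarrow> real"
  assumes x: "x \<in> jump_set a b u" and u: "set_integrable lborel {a<..<b} u"
  shows "\<exists>L1 L2. ap_rlim u x L1 \<and> ap_llim u x L2 \<and> jump u x = L1 - L2"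
proof -
  from x obtain L1 L2 where xab: "x \<in> {a<..<b}" and h: "ap_rlim u x L1" "ap_llim u x L2"
    unfolding jump_set_def by auto
  have "(THE L. ap_rlim u x L) = L1"
    using h(1) ap_rlim_unique[OF xab u] by blast
  moreover have "(THE L. ap_llim u x L) = L2"
    using h(2) ap_llim_unique[OF xab u] by blast
  ultimately show ?thesis using h unfolding jump_def by auto
qed

lemma pt_choose:
  fixes u :: "real \<Rightarrow> real"
  assumes x: "x \<in> {a<..<b}" and u: "set_integrable lborel {a<..<b} u"
    and h1: "ap_rlim u x L1" and h2: "ap_llim u x L2" and d: "d > 0" and e0: "\<eta>0 > 0"
  shows "\<exists>\<eta>. 0 < \<eta> \<and> \<eta> < \<eta>0 \<and> a < x - \<eta> \<and> x + \<eta> < b \<and>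
     \<bar>(LINT y:{a<..<b}|lborel. u y * phi' x \<eta> y) - (L2 - L1)\<bar> \<le> d"
proof -
  define A where "A r = (LINT t:{x-r<..<x}|lborel. \<bar>u t - L2\<bar>) / r" for r
  define B where "B r = (LINT t:{x<..<x+r}|lborel. \<bar>u t - L1\<bar>) / r" for r
  have "((\<lambda>r. 4 * (A r + B r)) \<longlongrightarrow> 4 * (0 + 0)) (at_right 0)"
    using h1 h2 unfolding ap_rlim_def ap_llim_def A_def B_def
    by (intro tendsto_intros)
  then have ev1: "eventually (\<lambda>r. 4 * (A r + B r) < d) (at_right 0)"
    using d by (auto dest: order_tendstoD(2))
  define c where "c = min \<eta>0 (min (x - a) (b - x))"
  have c: "c > 0" using x e0 unfolding c_def by auto
  have "eventually (\<lambda>r. (0 < r \<and> r < c) \<and> 4 * (A r + B r) < d) (at_right 0)"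
    by (rule eventually_conj[OF ev_small[OF c] ev1])
  then obtain \<eta> where eta: "0 < \<eta>" "\<eta> < c" "4 * (A \<eta> + B \<eta>) < d"
    using eventually_happens'[of "at_right (0::real)"] by auto
  have ab: "a < x - \<eta>" "x + \<eta> < b" using eta unfolding c_def by auto
  have "\<bar>(LINT y:{a<..<b}|lborel. u y * phi' x \<eta> y) - (L2 - L1)\<bar> \<le>
     4 / \<eta> * ((LINT t:{x-\<eta><..<x}|lborel. \<bar>u t - L2\<bar>) + (LINT t:{x<..<x+\<eta>}|lborel. \<bar>u t - L1\<bar>))"
    by (rule int_est[OF eta(1) ab u])
  also have "\<dots> = 4 * (A \<eta> + B \<eta>)"
    unfolding A_def B_def using eta by (simp add: field_simps)
  finally show ?thesis using eta ab unfolding c_def by (intro exI[of _ \<eta>]) auto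
qed

lemma int_uphi:
  fixes u :: "real \<Rightarrow> real"
  assumes u: "set_integrable lborel {a<..<b} u" and eta: "\<eta> > 0"
  shows "set_integrable lborel {a<..<b} (\<lambda>y. u y * phi' x \<eta> y)"
proof -
  have iu: "integrable lborel (\<lambda>y. indicator {a<..<b} y * u y)"
    using u unfolding set_integrable_def by simp
  have "integrable lborel (\<lambda>y. indicator {a<..<b} y * u y * phi' x \<eta> y)"
  proof (rule Bochner_Integration.integrable_bound[where f="\<lambda>y. 4 / \<eta> * (indicator {a<..<b} y * u y)"])
    show "integrable lborel (\<lambda>y. 4 / \<eta> * (indicator {a<..<b} y * u y))"
      using iu by (rule integrable_mult_right)
    show "(\<lambda>y. indicator {a<..<b} y * u y * phi' x \<eta> y) \<in> borel_measurable lborel"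
      using si_meas[OF u] phi'_meas by measurable
    show "AE y in lborel. norm (indicator {a<..<b} y * u y * phi' x \<eta> y) \<le> norm (4 / \<eta> * (indicator {a<..<b} y * u y))"
    proof (rule AE_I2)
      fix y
      have "\<bar>indicator {a<..<b} y * u y * phi' x \<eta> y\<bar> = \<bar>indicator {a<..<b} y * u y\<bar> * \<bar>phi' x \<eta> y\<bar>"
        by (simp add: abs_mult)
      also have "\<dots> \<le> \<bar>indicator {a<..<b} y * u y\<bar> * (4 / \<eta>)"
        by (intro mult_left_mono phi'_bound eta) simp
      finally show "norm (indicator {a<..<b} y * u y * phi' x \<eta> y) \<le> norm (4 / \<eta> * (indicator {a<..<b} y * u y))"
        using eta by (simp add: abs_mult mult.commute)
    qed
  qed
  then show ?thesis unfolding set_integrable_def by (simp add: mult.assoc)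
qed

lemma l1_est:
  fixes u U :: "real \<Rightarrow> real"
  assumes u: "set_integrable lborel {a<..<b} u" and U: "set_integrable lborel {a<..<b} U"
    and eta: "\<eta> > 0"
  shows "\<bar>(LINT y:{a<..<b}|lborel. U y * phi' x \<eta> y) - (LINT y:{a<..<b}|lborel. u y * phi' x \<eta> y)\<bar>
     \<le> 4 / \<eta> * (LINT y:{a<..<b}|lborel. \<bar>U y - u y\<bar>)"
proof -
  have iU: "set_integrable lborel {a<..<b} (\<lambda>y. U y * phi' x \<eta> y)" by (rule int_uphi[OF U eta])
  have iu: "set_integrable lborel {a<..<b} (\<lambda>y. u y * phi' x \<eta> y)" by (rule int_uphi[OF u eta])
  have id: "set_integrable lborel {a<..<b} (\<lambda>y. \<bar>U y - u y\<bar>)"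
    by (intro set_integrable_abs set_integral_diff(1) U u)
  have "(LINT y:{a<..<b}|lborel. U y * phi' x \<eta> y) - (LINT y:{a<..<b}|lborel. u y * phi' x \<eta> y)
      = (LINT y:{a<..<b}|lborel. U y * phi' x \<eta> y - u y * phi' x \<eta> y)"
    by (rule set_integral_diff(2)[OF iU iu, symmetric])
  also have "\<dots> = integral\<^sup>L lborel (\<lambda>y. indicator {a<..<b} y * ((U y - u y) * phi' x \<eta> y))"
    unfolding set_lebesgue_integral_def by (simp add: algebra_simps)
  finally have eq: "(LINT y:{a<..<b}|lborel. U y * phi' x \<eta> y) - (LINT y:{a<..<b}|lborel. u y * phi' x \<eta> y)
      = integral\<^sup>L lborel (\<lambda>y. indicator {a<..<b} y * ((U y - u y) * phi' x \<eta> y))" .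
  have i2: "integrable lborel (\<lambda>y. indicator {a<..<b} y * ((U y - u y) * phi' x \<eta> y))"
    using set_integral_diff(1)[OF iU iu] unfolding set_integrable_def by (simp add: algebra_simps)
  have i3: "integrable lborel (\<lambda>y. 4 / \<eta> * (indicator {a<..<b} y * \<bar>U y - u y\<bar>))"
    using id unfolding set_integrable_def by simp
  have "\<bar>integral\<^sup>L lborel (\<lambda>y. indicator {a<..<b} y * ((U y - u y) * phi' x \<eta> y))\<bar>
      \<le> integral\<^sup>L lborel (\<lambda>y. \<bar>indicator {a<..<b} y * ((U y - u y) * phi' x \<eta> y)\<bar>)"
    by (rule integral_abs_bound)
  also have "\<dots> \<le> integral\<^sup>L lborel (\<lambda>y. 4 / \<eta> * (indicator {a<..<b} y * \<bar>U y - u y\<bar>))"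
  proof (rule integral_mono[OF _ i3])
    show "integrable lborel (\<lambda>y. \<bar>indicator {a<..<b} y * ((U y - u y) * phi' x \<eta> y)\<bar>)"
      using i2 by (rule Bochner_Integration.integrable_abs)
    fix y
    have "\<bar>indicator {a<..<b} y * ((U y - u y) * phi' x \<eta> y)\<bar> = indicator {a<..<b} y * \<bar>U y - u y\<bar> * \<bar>phi' x \<eta> y\<bar>"
      by (simp add: abs_mult)
    also have "\<dots> \<le> indicator {a<..<b} y * \<bar>U y - u y\<bar> * (4 / \<eta>)"
      by (intro mult_left_mono phi'_bound eta) simp
    finally show "\<bar>indicator {a<..<b} y * ((U y - u y) * phi' x \<eta> y)\<bar> \<le> 4 / \<eta> * (indicator {a<..<b} y * \<bar>U y - u y\<bar>)"
      by (simp add: mult.commute)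
  qed
  also have "\<dots> = 4 / \<eta> * (LINT y:{a<..<b}|lborel. \<bar>U y - u y\<bar>)"
    unfolding set_lebesgue_integral_def by simp
  finally show ?thesis using eq by simp
qed

lemma phi_cont: "continuous_on UNIV (phi x \<eta>)"
  using phi_deriv DERIV_isCont continuous_at_imp_continuous_on by blast

lemma wd_bound:
  fixes U u' :: "real \<Rightarrow> real"
  assumes wd: "weak_deriv a b U u'" and u': "set_integrable lborel {a<..<b} u'"
    and eta: "\<eta> > 0" and ab: "a < x - \<eta>" "x + \<eta> < b"
  shows "\<bar>(LINT y:{a<..<b}|lborel. U y * phi' x \<eta> y)\<bar> \<le> (LINT y:{x-\<eta><..<x+\<eta>}|lborel. \<bar>u' y\<bar>)"
proof -
  have dphi: "deriv (phi x \<eta>) = phi' x \<eta>" by (rule ext) (rule deriv_phi)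
  have "(LINT y:{a<..<b}|lborel. U y * deriv (phi x \<eta>) y) = - (LINT y:{a<..<b}|lborel. u' y * phi x \<eta> y)"
    using wd phi_test[OF eta ab] unfolding weak_deriv_def by blast
  then have "(LINT y:{a<..<b}|lborel. U y * phi' x \<eta> y) = - (LINT y:{a<..<b}|lborel. u' y * phi x \<eta> y)"
    unfolding dphi .
  then have e: "\<bar>(LINT y:{a<..<b}|lborel. U y * phi' x \<eta> y)\<bar> = \<bar>integral\<^sup>L lborel (\<lambda>y. indicator {a<..<b} y * u' y * phi x \<eta> y)\<bar>"
    unfolding set_lebesgue_integral_def by (simp add: mult.assoc)
  have iu: "integrable lborel (\<lambda>y. indicator {a<..<b} y * u' y)"
    using u' unfolding set_integrable_def by simp
  have mphi: "phi x \<eta> \<in> borel_measurable borel"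
    by (rule borel_measurable_continuous_onI[OF phi_cont])
  have i1: "integrable lborel (\<lambda>y. indicator {a<..<b} y * u' y * phi x \<eta> y)"
  proof (rule Bochner_Integration.integrable_bound[OF iu])
    show "(\<lambda>y. indicator {a<..<b} y * u' y * phi x \<eta> y) \<in> borel_measurable lborel"
      using si_meas[OF u'] mphi by measurable
    show "AE y in lborel. norm (indicator {a<..<b} y * u' y * phi x \<eta> y) \<le> norm (indicator {a<..<b} y * u' y)"
      using phi_bound[of x \<eta>] by (intro AE_I2) (simp add: abs_mult mult_left_le)
  qed
  have i2: "integrable lborel (\<lambda>y. indicator {x-\<eta><..<x+\<eta>} y * \<bar>u' y\<bar>)"
    using abs_diff_set_int[OF u', of "x-\<eta>" "x+\<eta>" 0] ab unfolding set_integrable_def by simp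
  have "\<bar>integral\<^sup>L lborel (\<lambda>y. indicator {a<..<b} y * u' y * phi x \<eta> y)\<bar>
     \<le> integral\<^sup>L lborel (\<lambda>y. \<bar>indicator {a<..<b} y * u' y * phi x \<eta> y\<bar>)"
    by (rule integral_abs_bound)
  also have "\<dots> \<le> integral\<^sup>L lborel (\<lambda>y. indicator {x-\<eta><..<x+\<eta>} y * \<bar>u' y\<bar>)"
  proof (rule integral_mono[OF Bochner_Integration.integrable_abs[OF i1] i2])
    fix y
    show "\<bar>indicator {a<..<b} y * u' y * phi x \<eta> y\<bar> \<le> indicator {x-\<eta><..<x+\<eta>} y * \<bar>u' y\<bar>"
    proof (cases "y \<in> {x-\<eta><..<x+\<eta>}")
      case True
      then have "y \<in> {a<..<b}" using ab by auto
      then show ?thesis using True phi_bound[of x \<eta> y]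
        by (simp add: abs_mult mult_left_le)
    next
      case False
      then show ?thesis using phi_out[OF eta False] by simp
    qed
  qed
  also have "\<dots> = (LINT y:{x-\<eta><..<x+\<eta>}|lborel. \<bar>u' y\<bar>)"
    unfolding set_lebesgue_integral_def by simp
  finally show ?thesis using e by simp
qed

lemma l2l1:
  fixes h :: "real \<Rightarrow> real"
  assumes i1: "set_integrable lborel {c<..<d} h" and i2: "set_integrable lborel {c<..<d} (\<lambda>t. (h t)\<^sup>2)"
    and cd: "c \<le> d" and lam: "lam > 0"
  shows "(LINT t:{c<..<d}|lborel. \<bar>h t\<bar>) \<le> (LINT t:{c<..<d}|lborel. (h t)\<^sup>2) / (2 * lam) + lam * (d - c) / 2"
proof -
  have pw: "\<bar>h t\<bar> \<le> (h t)\<^sup>2 / (2 * lam) + lam / 2" for t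
  proof -
    have "0 \<le> (\<bar>h t\<bar> - lam)\<^sup>2" by simp
    then have "2 * lam * \<bar>h t\<bar> \<le> (h t)\<^sup>2 + lam\<^sup>2" by (simp add: power2_eq_square algebra_simps)
    then show ?thesis using lam by (simp add: field_simps power2_eq_square)
  qed
  have i3: "set_integrable lborel {c<..<d} (\<lambda>t. (h t)\<^sup>2 / (2 * lam) + lam / 2)"
    by (intro set_integral_add(1) const_set_int) (use i2 in simp)
  have "(LINT t:{c<..<d}|lborel. \<bar>h t\<bar>) \<le> (LINT t:{c<..<d}|lborel. (h t)\<^sup>2 / (2 * lam) + lam / 2)"
    by (rule set_integral_mono[OF set_integrable_abs[OF i1] i3 pw])
  also have "\<dots> = (LINT t:{c<..<d}|lborel. (h t)\<^sup>2) / (2 * lam) + (d - c) * (lam / 2)"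
  proof -
    have "(LINT t:{c<..<d}|lborel. (h t)\<^sup>2 / (2 * lam) + lam / 2) = (LINT t:{c<..<d}|lborel. (h t)\<^sup>2 / (2 * lam)) + (LINT t:{c<..<d}|lborel. lam / 2)"
      by (rule set_integral_add(2)) (use i2 const_set_int in simp_all)
    also have "(LINT t:{c<..<d}|lborel. (h t)\<^sup>2 / (2 * lam)) = (LINT t:{c<..<d}|lborel. (h t)\<^sup>2) / (2 * lam)"
      unfolding set_lebesgue_integral_def by simp
    also have "(LINT t:{c<..<d}|lborel. lam / 2) = (d - c) * (lam / 2)"
      by (rule const_int_val[OF cd])
    finally show ?thesis .
  qed
  finally show ?thesis by (simp add: field_simps)
qed

lemma radius:
  fixes F :: "real set"
  assumes "finite F" "F \<subseteq> A" "open A"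
  shows "\<exists>\<rho>>0. (\<forall>x\<in>F. {x-\<rho><..<x+\<rho>} \<subseteq> A) \<and> (\<forall>x\<in>F. \<forall>y\<in>F. x \<noteq> y \<longrightarrow> 2 * \<rho> \<le> \<bar>x - y\<bar>)"
  using assms
proof (induction F rule: finite_induct)
  case empty
  then show ?case by (intro exI[of _ 1]) auto
next
  case (insert z F)
  then obtain \<rho> where r: "\<rho> > 0" "\<forall>x\<in>F. {x-\<rho><..<x+\<rho>} \<subseteq> A"
    "\<forall>x\<in>F. \<forall>y\<in>F. x \<noteq> y \<longrightarrow> 2 * \<rho> \<le> \<bar>x - y\<bar>" by auto
  from insert have "z \<in> A" by auto
  then obtain e where e: "e > 0" "ball z e \<subseteq> A" using \<open>open A\<close> open_contains_ball by blast
  have ze: "{z-e<..<z+e} \<subseteq> A"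
    using e by (auto simp: subset_eq dist_real_def abs_if)
  define m where "m = (if F = {} then 1 else Min ((\<lambda>x. \<bar>z - x\<bar> / 2) ` F))"
  have m: "m > 0" using insert(1,2) unfolding m_def by auto
  have mle: "m \<le> \<bar>z - x\<bar> / 2" if "x \<in> F" for x
  proof -
    have "m = Min ((\<lambda>x. \<bar>z - x\<bar> / 2) ` F)" using that unfolding m_def by auto
    also have "\<dots> \<le> \<bar>z - x\<bar> / 2" by (rule Min_le) (use that insert(1) in auto)
    finally show ?thesis .
  qed
  define \<rho>' where "\<rho>' = min \<rho> (min e m)"
  have g1: "\<rho>' > 0" using r e m unfolding \<rho>'_def by auto
  have g2: "\<forall>x\<in>insert z F. {x-\<rho>'<..<x+\<rho>'} \<subseteq> A"
  proof
    fix x assume "x \<in> insert z F"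
    then show "{x-\<rho>'<..<x+\<rho>'} \<subseteq> A"
    proof
      assume "x = z"
      moreover have "{z-\<rho>'<..<z+\<rho>'} \<subseteq> {z-e<..<z+e}" unfolding \<rho>'_def by auto
      ultimately show ?thesis using ze by blast
    next
      assume xF: "x \<in> F"
      have "{x-\<rho>'<..<x+\<rho>'} \<subseteq> {x-\<rho><..<x+\<rho>}" unfolding \<rho>'_def by auto
      then show ?thesis using r(2) xF by blast
    qed
  qed
  have g3: "\<forall>x\<in>insert z F. \<forall>y\<in>insert z F. x \<noteq> y \<longrightarrow> 2 * \<rho>' \<le> \<bar>x - y\<bar>"
  proof (intro ballI impI)
    fix x y assume xy: "x \<in> insert z F" "y \<in> insert z F" "x \<noteq> y"
    have "\<rho>' \<le> \<rho>" "\<rho>' \<le> m" unfolding \<rho>'_def by auto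
    show "2 * \<rho>' \<le> \<bar>x - y\<bar>"
    proof (cases "x = z")
      case True
      then have "y \<in> F" using xy by auto
      then show ?thesis using mle[of y] True \<open>\<rho>' \<le> m\<close> by auto
    next
      case False
      then have xF: "x \<in> F" using xy by auto
      show ?thesis
      proof (cases "y = z")
        case True
        then show ?thesis using mle[OF xF] \<open>\<rho>' \<le> m\<close> by (auto simp: abs_minus_commute)
      next
        case False
        then have "y \<in> F" using xy by auto
        then have "2 * \<rho> \<le> \<bar>x - y\<bar>" using r(3) xF xy(3) by blast
        then show ?thesis using \<open>\<rho>' \<le> \<rho>\<close> by linarith
      qed
    qed
  qed
  show ?case
    apply (rule exI[of _ \<rho>'])
    apply (intro conjI)
      apply (rule g1)
     apply (rule g2)
    apply (rule g3)
    done
qed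

lemma fcap_lip:
  assumes c0: "c0 > 0" and e: "e \<ge> 0" and m: "m \<ge> J - e"
  shows "fcap c0 (m / 2) \<ge> fcap c0 (J / 2) - c0 * e / 2"
proof -
  have "min (m / 2) 1 \<ge> min (J / 2) 1 - e / 2" using e m by (auto simp: min_def)
  then have "c0 * min (m / 2) 1 \<ge> c0 * (min (J / 2) 1 - e / 2)"
    using c0 by (intro mult_left_mono) auto
  then show ?thesis unfolding fcap_def by (simp add: algebra_simps)
qed

lemma fcap_nn: "c0 > 0 \<Longrightarrow> t \<ge> 0 \<Longrightarrow> fcap c0 t \<ge> 0"
  unfolding fcap_def by simp

lemma sq_bound:
  fixes h :: "real \<Rightarrow> real"
  assumes i: "set_integrable lborel {a<..<b} (\<lambda>x. (h x)\<^sup>2)" and I: "I \<subseteq> A" "A \<subseteq> {a<..<b}"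
    and Ib: "I \<in> sets lborel"
    and T: "(\<integral>\<^sup>+ x. ennreal ((h x)\<^sup>2) * indicator A x \<partial>lborel) < ennreal C"
  shows "(LINT x:I|lborel. (h x)\<^sup>2) \<le> C"
proof -
  have iI: "integrable lborel (\<lambda>x. indicator I x * (h x)\<^sup>2)"
    using set_integrable_subset[OF i Ib] I unfolding set_integrable_def by auto
  have "(\<integral>\<^sup>+ x. ennreal (indicator I x * (h x)\<^sup>2) \<partial>lborel) = ennreal (integral\<^sup>L lborel (\<lambda>x. indicator I x * (h x)\<^sup>2))"
    by (rule nn_integral_eq_integral[OF iI]) simp
  then have "ennreal (LINT x:I|lborel. (h x)\<^sup>2) = (\<integral>\<^sup>+ x. ennreal (indicator I x * (h x)\<^sup>2) \<partial>lborel)"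
    unfolding set_lebesgue_integral_def by simp
  also have "\<dots> \<le> (\<integral>\<^sup>+ x. ennreal ((h x)\<^sup>2) * indicator A x \<partial>lborel)"
    by (rule nn_integral_mono) (use I in \<open>auto simp: indicator_def\<close>)
  also have "\<dots> < ennreal C" by (rule T)
  finally have "ennreal (LINT x:I|lborel. (h x)\<^sup>2) < ennreal C" .
  moreover have nn: "0 \<le> (LINT x:I|lborel. (h x)\<^sup>2)"
    unfolding set_lebesgue_integral_def by (simp add: integral_nonneg)
  ultimately show ?thesis using ennreal_less_iff[OF nn] by simp
qed

lemma per_pair:
  fixes u' g U :: "real \<Rightarrow> real" and F :: "real set" and \<eta> J :: "real \<Rightarrow> real"
    and \<Gamma> :: smeasure
  assumes c0: "c0 > 0" and F: "finite F"
    and rho: "\<rho> > 0" and Fsub: "\<forall>x\<in>F. {x-\<rho><..<x+\<rho>} \<subseteq> A"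
    and disj: "\<forall>x\<in>F. \<forall>y\<in>F. x \<noteq> y \<longrightarrow> 2 * \<rho> \<le> \<bar>x - y\<bar>"
    and Aab: "A \<subseteq> {a<..<b}"
    and eta: "\<forall>x\<in>F. 0 < \<eta> x \<and> \<eta> x < \<rho> / 2 \<and> lam * \<eta> x \<le> d / 2"
    and eps: "0 < \<epsilon>" "\<epsilon> < \<rho> / 8"
    and d: "d > 0" and lam: "lam > 0" and C: "C / (2 * lam) \<le> d / 2"
    and tv: "\<forall>x\<in>F. \<bar>(LINT y:{a<..<b}|lborel. U y * phi' x (\<eta> x) y)\<bar> \<ge> \<bar>J x\<bar> - 2 * d"
    and adm: "E_adm a b K U \<Gamma> u' g"
    and T1: "(\<integral>\<^sup>+ x. ennreal ((u' x - g x)\<^sup>2) * indicator A x \<partial>lborel) < ennreal C"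
  shows "ennreal (\<Sum>x\<in>F. 2 * fcap c0 (\<bar>J x\<bar> / 2) - 3 * c0 * d) \<le>
    ennreal (1 / \<epsilon>) * (\<integral>\<^sup>+ y. ennreal (fcap c0 (\<epsilon> * avg_abs a b \<epsilon> g y)) * indicator A y \<partial>lborel)"
proof -
  from adm have wd: "weak_deriv a b U u'" and iu': "set_integrable lborel {a<..<b} u'"
    and ig: "set_integrable lborel {a<..<b} g"
    and ih2: "set_integrable lborel {a<..<b} (\<lambda>x. (u' x - g x)\<^sup>2)"
    unfolding E_adm_def by auto
  define fe where "fe y = ennreal (fcap c0 (\<epsilon> * avg_abs a b \<epsilon> g y))" for y
  define M where "M x = (LINT t:{x - \<eta> x<..<x + \<eta> x}|lborel. \<bar>g t\<bar>)" for x
  have inner: "x - \<eta> x - 2 * \<epsilon> \<in> {a<..<b} \<and> x + \<eta> x + 2 * \<epsilon> \<in> {a<..<b}" if x: "x \<in> F" for x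
  proof -
    have "x - \<eta> x - 2 * \<epsilon> \<in> {x-\<rho><..<x+\<rho>}" "x + \<eta> x + 2 * \<epsilon> \<in> {x-\<rho><..<x+\<rho>}"
      using eta x eps rho by auto
    then show ?thesis using Fsub x Aab by blast
  qed
  have Mb: "M x \<ge> \<bar>J x\<bar> - 3 * d" if x: "x \<in> F" for x
  proof -
    define e where "e = \<eta> x"
    have e: "0 < e" "e < \<rho> / 2" "lam * e \<le> d / 2" using eta x unfolding e_def by auto
    have in1: "a < x - e - 2 * \<epsilon>" "x + e + 2 * \<epsilon> < b" using inner[OF x] unfolding e_def by auto
    have ab: "a < x - e" "x + e < b" using in1 eps(1) by linarith+
    have "{x-e<..<x+e} \<subseteq> {x-\<rho><..<x+\<rho>}" using e by auto
    then have Isub: "{x-e<..<x+e} \<subseteq> A"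
      using Fsub x by blast
    have i_h: "set_integrable lborel {x-e<..<x+e} (\<lambda>t. u' t - g t)"
      by (rule set_integrable_subset[OF set_integral_diff(1)[OF iu' ig]]) (use ab in auto)
    have i_h2: "set_integrable lborel {x-e<..<x+e} (\<lambda>t. (u' t - g t)\<^sup>2)"
      by (rule set_integrable_subset[OF ih2]) (use ab in auto)
    have i_u': "set_integrable lborel {x-e<..<x+e} (\<lambda>t. \<bar>u' t\<bar>)"
      using abs_diff_set_int[OF iu', of "x-e" "x+e" 0] ab by simp
    have i_g: "set_integrable lborel {x-e<..<x+e} (\<lambda>t. \<bar>g t\<bar>)"
      using abs_diff_set_int[OF ig, of "x-e" "x+e" 0] ab by simp
    have sq: "(LINT t:{x-e<..<x+e}|lborel. (u' t - g t)\<^sup>2) \<le> C"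
      by (rule sq_bound[OF ih2 Isub Aab _ T1]) simp
    have "(LINT t:{x-e<..<x+e}|lborel. \<bar>u' t - g t\<bar>) \<le>
        (LINT t:{x-e<..<x+e}|lborel. (u' t - g t)\<^sup>2) / (2 * lam) + lam * (x + e - (x - e)) / 2"
      by (rule l2l1[OF i_h i_h2 _ lam]) (use e in simp)
    also have "\<dots> \<le> C / (2 * lam) + lam * e"
      using sq lam by (simp add: divide_right_mono)
    also have "\<dots> \<le> d" using C e by simp
    finally have hd: "(LINT t:{x-e<..<x+e}|lborel. \<bar>u' t - g t\<bar>) \<le> d" .
    have "(LINT t:{x-e<..<x+e}|lborel. \<bar>u' t\<bar>) \<le> (LINT t:{x-e<..<x+e}|lborel. \<bar>g t\<bar> + \<bar>u' t - g t\<bar>)"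
      by (rule set_integral_mono[OF i_u']) (use i_g set_integrable_abs[OF i_h] in auto)
    also have "\<dots> = M x + (LINT t:{x-e<..<x+e}|lborel. \<bar>u' t - g t\<bar>)"
      unfolding M_def e_def[symmetric] by (rule set_integral_add(2)[OF i_g set_integrable_abs[OF i_h]])
    finally have "(LINT t:{x-e<..<x+e}|lborel. \<bar>u' t\<bar>) \<le> M x + d" using hd by simp
    moreover have "\<bar>(LINT y:{a<..<b}|lborel. U y * phi' x e y)\<bar> \<le> (LINT t:{x-e<..<x+e}|lborel. \<bar>u' t\<bar>)"
      by (rule wd_bound[OF wd iu' e(1) ab])
    moreover have "\<bar>(LINT y:{a<..<b}|lborel. U y * phi' x e y)\<bar> \<ge> \<bar>J x\<bar> - 2 * d"
      using tv x unfolding e_def by auto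
    ultimately show ?thesis by simp
  qed
  have "\<forall>x\<in>F. \<exists>h. h \<in> borel_measurable lborel \<and>
      (\<forall>y. h y \<le> fe y * indicator {x - \<eta> x - \<epsilon><..<x + \<eta> x + \<epsilon>} y) \<and>
      ennreal (2 * fcap c0 (M x / 2)) \<le> ennreal (1 / \<epsilon>) * integral\<^sup>N lborel h"
  proof
    fix x assume x: "x \<in> F"
    have e: "0 < \<eta> x" using eta x by auto
    have "\<exists>h. h \<in> borel_measurable lborel \<and>
      (\<forall>y. h y \<le> ennreal (fcap c0 (\<epsilon> * avg_abs a b \<epsilon> g y)) * indicator {(x - \<eta> x) - \<epsilon><..<(x + \<eta> x) + \<epsilon>} y) \<and>
      ennreal (2 * fcap c0 ((LINT t:{x - \<eta> x<..<x + \<eta> x}|lborel. \<bar>g t\<bar>) / 2)) \<le> ennreal (1 / \<epsilon>) * integral\<^sup>N lborel h"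
      by (rule fub[OF eps(1) c0 _ _ _ ig]) (use e inner[OF x] in auto)
    then show "\<exists>h. h \<in> borel_measurable lborel \<and>
      (\<forall>y. h y \<le> fe y * indicator {x - \<eta> x - \<epsilon><..<x + \<eta> x + \<epsilon>} y) \<and>
      ennreal (2 * fcap c0 (M x / 2)) \<le> ennreal (1 / \<epsilon>) * integral\<^sup>N lborel h"
      unfolding fe_def M_def by simp
  qed
  then obtain H where H: "\<forall>x\<in>F. H x \<in> borel_measurable lborel \<and>
      (\<forall>y. H x y \<le> fe y * indicator {x - \<eta> x - \<epsilon><..<x + \<eta> x + \<epsilon>} y) \<and>
      ennreal (2 * fcap c0 (M x / 2)) \<le> ennreal (1 / \<epsilon>) * integral\<^sup>N lborel (H x)"
    by (rule bchoice[THEN exE]) blast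
  have Hm: "H x \<in> borel_measurable lborel" if "x \<in> F" for x using H that by blast
  have Hle: "H x y \<le> fe y * indicator {x - \<eta> x - \<epsilon><..<x + \<eta> x + \<epsilon>} y" if "x \<in> F" for x y
    using H that by blast
  have Hint: "ennreal (2 * fcap c0 (M x / 2)) \<le> ennreal (1 / \<epsilon>) * integral\<^sup>N lborel (H x)" if "x \<in> F" for x
    using H that by blast
  have Rsub: "{x - \<eta> x - \<epsilon><..<x + \<eta> x + \<epsilon>} \<subseteq> {x-\<rho><..<x+\<rho>}" if "x \<in> F" for x
    using eta that eps rho by auto
  have Hzero: "H x y = 0" if "x \<in> F" "y \<notin> {x-\<rho><..<x+\<rho>}" for x y
  proof -
    have "y \<notin> {x - \<eta> x - \<epsilon><..<x + \<eta> x + \<epsilon>}" using Rsub[OF that(1)] that(2) by blast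
    then have "H x y \<le> 0" using Hle[OF that(1), of y] by simp
    then show ?thesis by simp
  qed
  have pw: "(\<Sum>x\<in>F. H x y) \<le> fe y * indicator A y" for y
  proof (cases "\<exists>x0\<in>F. y \<in> {x0-\<rho><..<x0+\<rho>}")
    case False
    then have "(\<Sum>x\<in>F. H x y) = 0" using Hzero by (simp add: sum.neutral)
    then show ?thesis by simp
  next
    case True
    then obtain x0 where x0: "x0 \<in> F" "y \<in> {x0-\<rho><..<x0+\<rho>}" by blast
    have yA: "y \<in> A" using Fsub x0 by blast
    have others: "H x y = 0" if "x \<in> F - {x0}" for x
    proof (rule Hzero)
      show "x \<in> F" using that by auto
      show "y \<notin> {x-\<rho><..<x+\<rho>}"
      proof
        assume "y \<in> {x-\<rho><..<x+\<rho>}"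
        then have "\<bar>x - x0\<bar> < 2 * \<rho>" using x0(2) by auto
        moreover have "2 * \<rho> \<le> \<bar>x - x0\<bar>" using disj that x0(1) by auto
        ultimately show False by simp
      qed
    qed
    have "(\<Sum>x\<in>F. H x y) = H x0 y + (\<Sum>x\<in>F - {x0}. H x y)"
      by (rule sum.remove[OF F x0(1)])
    also have "(\<Sum>x\<in>F - {x0}. H x y) = 0" using others by simp
    also have "H x0 y \<le> fe y * indicator {x0 - \<eta> x0 - \<epsilon><..<x0 + \<eta> x0 + \<epsilon>} y"
      by (rule Hle[OF x0(1)])
    also have "\<dots> \<le> fe y" by (simp add: indicator_def)
    finally show ?thesis using yA by simp
  qed
  have "ennreal (\<Sum>x\<in>F. 2 * fcap c0 (\<bar>J x\<bar> / 2) - 3 * c0 * d) \<le> ennreal (\<Sum>x\<in>F. 2 * fcap c0 (M x / 2))"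
  proof (rule ennreal_leI, rule sum_mono)
    fix x assume x: "x \<in> F"
    have "fcap c0 (M x / 2) \<ge> fcap c0 (\<bar>J x\<bar> / 2) - c0 * (3 * d) / 2"
      by (rule fcap_lip[OF c0]) (use d Mb[OF x] in auto)
    then show "2 * fcap c0 (\<bar>J x\<bar> / 2) - 3 * c0 * d \<le> 2 * fcap c0 (M x / 2)" by simp
  qed
  also have "\<dots> = (\<Sum>x\<in>F. ennreal (2 * fcap c0 (M x / 2)))"
  proof (rule sum_ennreal[symmetric])
    fix x assume "x \<in> F"
    have "M x \<ge> 0" unfolding M_def set_lebesgue_integral_def by (simp add: integral_nonneg)
    then have "0 \<le> fcap c0 (M x / 2)" by (intro fcap_nn[OF c0]) simp
    then show "0 \<le> 2 * fcap c0 (M x / 2)" by linarith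
  qed
  also have "\<dots> \<le> (\<Sum>x\<in>F. ennreal (1 / \<epsilon>) * integral\<^sup>N lborel (H x))"
    by (rule sum_mono) (rule Hint)
  also have "\<dots> = ennreal (1 / \<epsilon>) * (\<Sum>x\<in>F. integral\<^sup>N lborel (H x))"
    by (rule sum_distrib_left[symmetric])
  also have "\<dots> \<le> ennreal (1 / \<epsilon>) * (\<integral>\<^sup>+ y. fe y * indicator A y \<partial>lborel)"
  proof -
    have s1: "(\<integral>\<^sup>+ y. (\<Sum>x\<in>F. H x y) \<partial>lborel) \<le> (\<integral>\<^sup>+ y. fe y * indicator A y \<partial>lborel)"
      by (rule nn_integral_mono) (rule pw)
    have s2: "(\<Sum>x\<in>F. integral\<^sup>N lborel (H x)) = (\<integral>\<^sup>+ y. (\<Sum>x\<in>F. H x y) \<partial>lborel)"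
      by (rule nn_integral_sum[symmetric]) (rule Hm)
    show ?thesis unfolding s2 by (rule mult_left_mono[OF s1]) simp
  qed
  finally show ?thesis unfolding fe_def .
qed

lemma key_eventually:
  fixes u :: "real \<Rightarrow> real" and U :: "real \<Rightarrow> real \<Rightarrow> real" and \<Gamma> :: "real \<Rightarrow> smeasure"
    and F :: "real set"
  assumes ab: "a < b" and c0: "c0 > 0" and A: "open A" "A \<subseteq> {a<..<b}"
    and u: "set_integrable lborel {a<..<b} u"
    and hU: "\<forall>\<epsilon>>0. set_integrable lborel {a<..<b} (U \<epsilon>)"
    and conv: "((\<lambda>\<epsilon>. LINT x:{a<..<b}|lborel. \<bar>U \<epsilon> x - u x\<bar>) \<longlongrightarrow> 0) (at_right 0)"
    and F: "finite F" "F \<subseteq> jump_set a b u \<inter> A"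
    and t: "0 \<le> t" "t < 2 * (\<Sum>x\<in>F. fcap c0 (\<bar>jump u x\<bar> / 2))"
  shows "eventually (\<lambda>\<epsilon>. ennreal t \<le> E_eps a b K c0 \<epsilon> (U \<epsilon>) (\<Gamma> \<epsilon>) A) (at_right 0)"
proof -
  define S where "S = (\<Sum>x\<in>F. fcap c0 (\<bar>jump u x\<bar> / 2))"
  have t': "0 \<le> t" "t < 2 * S" using t unfolding S_def by auto
  have Fne: "F \<noteq> {}"
  proof
    assume "F = {}"
    then have "S = 0" unfolding S_def by simp
    then show False using t' by simp
  qed
  define n where "n = card F"
  have n: "n > 0" using F(1) Fne unfolding n_def by (simp add: card_gt_0_iff)
  define d where "d = (2 * S - t) / (6 * n * c0)"
  have d: "d > 0" using t n c0 unfolding d_def S_def by (simp add: divide_pos_pos)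
  define C where "C = t + 1"
  have C: "C > 0" using t unfolding C_def by simp
  define lam where "lam = C / d"
  have lam: "lam > 0" using C d unfolding lam_def by simp
  have Clam: "C / (2 * lam) \<le> d / 2" using C d unfolding lam_def by (simp add: field_simps)
  obtain \<rho> where rho: "\<rho> > 0" and Fsub: "\<forall>x\<in>F. {x-\<rho><..<x+\<rho>} \<subseteq> A"
    and disj: "\<forall>x\<in>F. \<forall>y\<in>F. x \<noteq> y \<longrightarrow> 2 * \<rho> \<le> \<bar>x - y\<bar>"
    using radius[OF F(1) _ A(1)] F(2) by blast
  define \<eta>0 where "\<eta>0 = min (\<rho> / 2) (d / (2 * lam))"
  have e0: "\<eta>0 > 0" using rho d lam unfolding \<eta>0_def by simp
  have "\<forall>x\<in>F. \<exists>\<eta>. 0 < \<eta> \<and> \<eta> < \<eta>0 \<and> a < x - \<eta> \<and> x + \<eta> < b \<and>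
      \<bar>(LINT y:{a<..<b}|lborel. u y * phi' x \<eta> y) + jump u x\<bar> \<le> d"
  proof
    fix x assume x: "x \<in> F"
    then have xj: "x \<in> jump_set a b u" using F(2) by auto
    then have xab: "x \<in> {a<..<b}" unfolding jump_set_def by auto
    obtain L1 L2 where L: "ap_rlim u x L1" "ap_llim u x L2" "jump u x = L1 - L2"
      using jump_val[OF xj u] by blast
    obtain \<eta> where "0 < \<eta> \<and> \<eta> < \<eta>0 \<and> a < x - \<eta> \<and> x + \<eta> < b \<and>
       \<bar>(LINT y:{a<..<b}|lborel. u y * phi' x \<eta> y) - (L2 - L1)\<bar> \<le> d"
      using pt_choose[OF xab u L(1) L(2) d e0] by blast
    moreover have "(LINT y:{a<..<b}|lborel. u y * phi' x \<eta> y) + jump u x = (LINT y:{a<..<b}|lborel. u y * phi' x \<eta> y) - (L2 - L1)"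
      using L(3) by simp
    ultimately show "\<exists>\<eta>. 0 < \<eta> \<and> \<eta> < \<eta>0 \<and> a < x - \<eta> \<and> x + \<eta> < b \<and>
      \<bar>(LINT y:{a<..<b}|lborel. u y * phi' x \<eta> y) + jump u x\<bar> \<le> d"
      by (intro exI[of _ \<eta>]) presburger
  qed
  then obtain \<eta> where eta: "\<forall>x\<in>F. 0 < \<eta> x \<and> \<eta> x < \<eta>0 \<and> a < x - \<eta> x \<and> x + \<eta> x < b \<and>
      \<bar>(LINT y:{a<..<b}|lborel. u y * phi' x (\<eta> x) y) + jump u x\<bar> \<le> d"
    by (rule bchoice[THEN exE]) blast
  have eta2: "\<forall>x\<in>F. 0 < \<eta> x \<and> \<eta> x < \<rho> / 2 \<and> lam * \<eta> x \<le> d / 2"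
  proof
    fix x assume x: "x \<in> F"
    then have "\<eta> x < d / (2 * lam)" "\<eta> x < \<rho> / 2" "0 < \<eta> x" using eta unfolding \<eta>0_def by auto
    then show "0 < \<eta> x \<and> \<eta> x < \<rho> / 2 \<and> lam * \<eta> x \<le> d / 2"
      using lam by (simp add: field_simps)
  qed
  have ev1: "eventually (\<lambda>\<epsilon>. 0 < \<epsilon> \<and> \<epsilon> < \<rho> / 8) (at_right 0)"
    by (rule ev_small) (use rho in simp)
  have ev2: "eventually (\<lambda>\<epsilon>. \<forall>x\<in>F. 4 / \<eta> x * (LINT y:{a<..<b}|lborel. \<bar>U \<epsilon> y - u y\<bar>) < d) (at_right 0)"
  proof (rule eventually_ball_finite[OF F(1)], intro ballI)
    fix x assume "x \<in> F"
    have "((\<lambda>\<epsilon>. 4 / \<eta> x * (LINT y:{a<..<b}|lborel. \<bar>U \<epsilon> y - u y\<bar>)) \<longlongrightarrow> 4 / \<eta> x * 0) (at_right 0)"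
      by (intro tendsto_mult tendsto_const conv)
    then show "eventually (\<lambda>\<epsilon>. 4 / \<eta> x * (LINT y:{a<..<b}|lborel. \<bar>U \<epsilon> y - u y\<bar>) < d) (at_right 0)"
      using d by (auto dest: order_tendstoD(2))
  qed
  show ?thesis
    using eventually_conj[OF ev1 ev2]
  proof (rule eventually_mono)
    fix \<epsilon> assume e: "(0 < \<epsilon> \<and> \<epsilon> < \<rho> / 8) \<and> (\<forall>x\<in>F. 4 / \<eta> x * (LINT y:{a<..<b}|lborel. \<bar>U \<epsilon> y - u y\<bar>) < d)"
    have Ue: "set_integrable lborel {a<..<b} (U \<epsilon>)" using hU e by auto
    have tv: "\<forall>x\<in>F. \<bar>(LINT y:{a<..<b}|lborel. U \<epsilon> y * phi' x (\<eta> x) y)\<bar> \<ge> \<bar>jump u x\<bar> - 2 * d"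
    proof
      fix x assume x: "x \<in> F"
      have ex: "0 < \<eta> x" using eta x by auto
      have "\<bar>(LINT y:{a<..<b}|lborel. U \<epsilon> y * phi' x (\<eta> x) y) - (LINT y:{a<..<b}|lborel. u y * phi' x (\<eta> x) y)\<bar>
          \<le> 4 / \<eta> x * (LINT y:{a<..<b}|lborel. \<bar>U \<epsilon> y - u y\<bar>)"
        by (rule l1_est[OF u Ue ex])
      also have "\<dots> < d" using e x by auto
      finally have h1: "\<bar>(LINT y:{a<..<b}|lborel. U \<epsilon> y * phi' x (\<eta> x) y) - (LINT y:{a<..<b}|lborel. u y * phi' x (\<eta> x) y)\<bar> < d" .
      have h2: "\<bar>(LINT y:{a<..<b}|lborel. u y * phi' x (\<eta> x) y) + jump u x\<bar> \<le> d" using eta x by auto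
      show "\<bar>(LINT y:{a<..<b}|lborel. U \<epsilon> y * phi' x (\<eta> x) y)\<bar> \<ge> \<bar>jump u x\<bar> - 2 * d"
        using h1 h2 by linarith
    qed
    show "ennreal t \<le> E_eps a b K c0 \<epsilon> (U \<epsilon>) (\<Gamma> \<epsilon>) A"
      unfolding E_eps_def
    proof (rule INF_greatest)
      fix p assume "p \<in> {(u', g). E_adm a b K (U \<epsilon>) (\<Gamma> \<epsilon>) u' g}"
      then obtain u' g where p: "p = (u', g)" and adm: "E_adm a b K (U \<epsilon>) (\<Gamma> \<epsilon>) u' g" by blast
      define T1 where "T1 = (\<integral>\<^sup>+ x. ennreal ((u' x - g x)\<^sup>2) * indicator A x \<partial>lborel)"
      define T2 where "T2 = (\<integral>\<^sup>+ y. ennreal (fcap c0 (\<epsilon> * avg_abs a b \<epsilon> g y)) * indicator A y \<partial>lborel)"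
      have en: "energy a b c0 \<epsilon> u' g A = T1 + ennreal (1 / \<epsilon>) * T2"
        unfolding energy_def T1_def T2_def ..
      show "ennreal t \<le> energy a b c0 \<epsilon> (fst p) (snd p) A"
      proof (cases "T1 < ennreal C")
        case False
        then have c1: "ennreal C \<le> T1" by (simp add: not_less)
        have c2: "ennreal t \<le> ennreal C" by (rule ennreal_leI) (simp add: C_def)
        have "ennreal t \<le> T1" using c1 c2 by (rule order_trans[rotated])
        also have "T1 \<le> T1 + ennreal (1 / \<epsilon>) * T2" by simp
        finally show ?thesis using p en by simp
      next
        case True
        have "ennreal (\<Sum>x\<in>F. 2 * fcap c0 (\<bar>jump u x\<bar> / 2) - 3 * c0 * d) \<le> ennreal (1 / \<epsilon>) * T2"
          unfolding T2_def
          by (rule per_pair[OF c0 F(1) rho Fsub disj A(2) eta2 _ _ d lam Clam tv adm True[unfolded T1_def]])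
             (use e in auto)
        moreover have "t \<le> (\<Sum>x\<in>F. 2 * fcap c0 (\<bar>jump u x\<bar> / 2) - 3 * c0 * d)"
        proof -
          have "(\<Sum>x\<in>F. 2 * fcap c0 (\<bar>jump u x\<bar> / 2) - 3 * c0 * d) = 2 * S - n * (3 * c0 * d)"
            unfolding S_def n_def by (simp add: sum_subtractf sum_distrib_left)
          also have "n * (3 * c0 * d) = (2 * S - t) / 2"
            unfolding d_def using n c0 by (simp add: field_simps)
          finally have eqS: "(\<Sum>x\<in>F. 2 * fcap c0 (\<bar>jump u x\<bar> / 2) - 3 * c0 * d) = 2 * S - (2 * S - t) / 2" .
          have "t \<le> 2 * S - (2 * S - t) / 2" using t' by (simp add: field_simps)
          then show ?thesis unfolding eqS .
        qed
        ultimately have "ennreal t \<le> ennreal (1 / \<epsilon>) * T2"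
          using ennreal_leI order_trans by blast
        also have "\<dots> \<le> T1 + ennreal (1 / \<epsilon>) * T2" by simp
        finally show ?thesis using p en by simp
      qed
    qed
  qed
qed

lemma key_finite:
  fixes u :: "real \<Rightarrow> real" and U :: "real \<Rightarrow> real \<Rightarrow> real" and \<Gamma> :: "real \<Rightarrow> smeasure"
    and F :: "real set"
  assumes ab: "a < b" and c0: "c0 > 0" and A: "open A" "A \<subseteq> {a<..<b}"
    and u: "set_integrable lborel {a<..<b} u"
    and hU: "\<forall>\<epsilon>>0. set_integrable lborel {a<..<b} (U \<epsilon>)"
    and conv: "((\<lambda>\<epsilon>. LINT x:{a<..<b}|lborel. \<bar>U \<epsilon> x - u x\<bar>) \<longlongrightarrow> 0) (at_right 0)"
    and F: "finite F" "F \<subseteq> jump_set a b u \<inter> A"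
  shows "2 * (\<Sum>x\<in>F. ennreal (fcap c0 (\<bar>jump u x\<bar> / 2))) \<le>
     Liminf (at_right 0) (\<lambda>\<epsilon>. E_eps a b K c0 \<epsilon> (U \<epsilon>) (\<Gamma> \<epsilon>) A)"
proof -
  define S where "S = (\<Sum>x\<in>F. fcap c0 (\<bar>jump u x\<bar> / 2))"
  have Snn: "0 \<le> S" unfolding S_def by (intro sum_nonneg fcap_nn[OF c0]) simp
  have "(\<Sum>x\<in>F. ennreal (fcap c0 (\<bar>jump u x\<bar> / 2))) = ennreal S"
    unfolding S_def by (rule sum_ennreal) (intro fcap_nn[OF c0], simp)
  then have eq: "2 * (\<Sum>x\<in>F. ennreal (fcap c0 (\<bar>jump u x\<bar> / 2))) = ennreal (2 * S)"
    using Snn by (simp add: ennreal_mult)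
  show ?thesis
    unfolding eq le_Liminf_iff
  proof (intro allI impI)
    fix y assume y: "y < ennreal (2 * S)"
    then have yt: "y \<noteq> top" by auto
    define r where "r = enn2real y"
    have r: "0 \<le> r" "y = ennreal r" unfolding r_def using yt by (auto simp: ennreal_enn2real_if)
    have r2: "r < 2 * S" using y r ennreal_less_iff[OF r(1)] by simp
    define t where "t = (r + 2 * S) / 2"
    have t: "0 \<le> t" "t < 2 * S" "r < t" using r r2 unfolding t_def by auto
    have ev: "eventually (\<lambda>\<epsilon>. ennreal t \<le> E_eps a b K c0 \<epsilon> (U \<epsilon>) (\<Gamma> \<epsilon>) A) (at_right 0)"
      by (rule key_eventually[OF ab c0 A u hU conv F t(1)]) (use t(2) in \<open>simp add: S_def\<close>)
    have yl: "y < ennreal t" using r t by (simp add: ennreal_lessI)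
    show "eventually (\<lambda>\<epsilon>. y < E_eps a b K c0 \<epsilon> (U \<epsilon>) (\<Gamma> \<epsilon>) A) (at_right 0)"
      using ev by (rule eventually_mono) (use yl in auto)
  qed
qed

theorem mainTheorem7:
  fixes a b c0 K :: real and A :: "real set" and u u' g :: "real \<Rightarrow> real"
    and \<gamma> Dsu :: smeasure
  assumes "a < b" and "c0 > 0" and "K > 0"
    and "open A" and "A \<subseteq> {a<..<b}"
    and "BV_decomp a b u u' Dsu"
    and "smeas a b \<gamma>"
    and "set_integrable lborel {a<..<b} g"
    and "\<forall>S\<in>sets borel. sval \<gamma> S = sval Dsu S + (LINT x:(S \<inter> {a<..<b})|lborel. g x)"
    and "set_integrable lborel {a<..<b} (\<lambda>x. (u' x - g x)\<^sup>2)"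
  shows "E_low a b K c0 u \<gamma> A \<ge>
           2 * (\<Sum>\<^sub>\<infinity> x\<in>jump_set a b u \<inter> A. ennreal (fcap c0 (\<bar>jump u x\<bar> / 2)))"
proof -
  have u: "set_integrable lborel {a<..<b} u" using assms(6) unfolding BV_decomp_def by auto
  have inf: "(\<Sum>\<^sub>\<infinity> x\<in>jump_set a b u \<inter> A. ennreal (fcap c0 (\<bar>jump u x\<bar> / 2))) =
      (SUP F\<in>{F. finite F \<and> F \<subseteq> jump_set a b u \<inter> A}. (\<Sum>x\<in>F. ennreal (fcap c0 (\<bar>jump u x\<bar> / 2))))"
    by (rule nonneg_infsum_complete) simp
  show ?thesis
    unfolding E_low_def
  proof (rule INF_greatest, goal_cases)
    case (1 p)
    obtain U \<Gamma> where pe: "p = (U, \<Gamma>)" by (cases p)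
    have hU: "\<forall>\<epsilon>>0. set_integrable lborel {a<..<b} (U \<epsilon>)" using 1 pe by auto
    have conv: "((\<lambda>\<epsilon>. LINT x:{a<..<b}|lborel. \<bar>U \<epsilon> x - u x\<bar>) \<longlongrightarrow> 0) (at_right 0)" using 1 pe by auto
    show ?case
      unfolding inf SUP_mult_left_ennreal pe fst_conv snd_conv
    proof (rule SUP_least)
      fix F assume "F \<in> {F. finite F \<and> F \<subseteq> jump_set a b u \<inter> A}"
      then have F: "finite F" "F \<subseteq> jump_set a b u \<inter> A" by auto
      show "2 * (\<Sum>x\<in>F. ennreal (fcap c0 (\<bar>jump u x\<bar> / 2))) \<le>
          Liminf (at_right 0) (\<lambda>\<epsilon>. E_eps a b K c0 \<epsilon> (U \<epsilon>) (\<Gamma> \<epsilon>) A)"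
        by (rule key_finite[OF assms(1,2,4,5) u hU conv F])
    qed
  qed
qed

end
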